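(* Let $X$ be a Tychonoff space. Then: (i) the games $G_1(\mathscr N[K(X)],\neg\Omega_X)$, $G_1(\mathscr N_{C_k(X)}(\mathbf 0),\neg\Omega_{C_p(X),\mathbf 0})$ and $G_1(\mathscr T_{C_k(X)},\mathrm{CD}_{C_p(X)})$ are equivalent; (ii) the games $G_1(\mathcal K_X,\Omega_X)$, $G_1(\Omega_{C_k(X),\mathbf 0},\Omega_{C_p(X),\mathbf 0})$ and $G_1(\mathcal D_{C_k(X)},\Omega_{C_p(X),\mathbf 0})$ are equivalent; (iii) each game in (i) is dual to each game in (ii); (iv) $\mathrm{I}\underset{\mathrm{pre}}{\uparrow}G_1(\mathscr T_{C_k(X)},\mathrm{CD}_{C_p(X)})$ iff $X$ is $\sigma$-compact iff $\mathrm{cof}(\mathscr N_{C_k(X)}(\mathbf 0);\mathscr N_{C_p(X)}(\mathbf 0),\supseteq)=\omega$; (v) the games $G_1(\mathscr N[K(X)],\neg\Gamma_X)$ and $G_1(\mathscr N_{C_k(X)}(\mathbf 0),\neg\Gamma_{C_p(X),\mathbf 0})$ are equivalent for player One to $G_1(\mathscr N[K(X)],\neg\Omega_X)$ and $G_1(\mathscr N_{C_k(X)}(\mathbf 0),\neg\Omega_{C_p(X),\mathbf 0})$; (vi) $G_1(\mathcal K_X,\Omega_X)$ and $G_1(\mathcal K_X,\Gamma_X)$ are equivalent for player Two.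
   Context: $K(X)$ is the family of nonempty compact subsets of $X$. $C_p(X)$ ($C_k(X)$) is the set of continuous $f:X\to\mathbb R$ with the topology of pointwise convergence (uniform convergence on compact sets), generated by sets $[f;A,\varepsilon]=\{g:\sup_{x\in A}|f(x)-g(x)|<\varepsilon\}$ with $A$ finite (resp. compact), $\varepsilon>0$; $\mathbf 0$ is the zero function. $\Omega_X$ is the set of $\omega$-covers of $X$: open covers $\mathscr U$ with $X\notin\mathscr U$ such that every finite $F\subseteq X$ lies in some $U\in\mathscr U$. $\mathcal K_X$ is the set of $k$-covers: open covers $\mathscr U$ with $X\notin\mathscr U$ such that every compact $K\subseteq X$ lies in some member. $\Gamma_X$ is the set of $\gamma$-covers: infinite open covers $\mathscr U$ with $X\notin\mathscr U$ such that for every finite $F\subseteq X$, $\{U\in\mathscr U:F\not\subseteq U\}$ is finite. $\mathscr N[K(X)]=\{\mathscr N(K):K\in K(X)\}$ with $\mathscr N(K)$ the set of open $U\neq X$ with $K\subseteq U$. For a space $Y$ and $y\in Y$: $\mathscr N_Y(y)$ = open neighbourhoods of $y$; $\mathscr T_Y$ = nonempty open sets; $\mathcal D_Y$ = dense sets; $\mathrm{CD}_Y$ = closed discrete sets; $\Omega_{Y,y}=\{S\subseteq Y:y\in\mathrm{cl}(S)\}$; $\Gamma_{Y,y}$ = sequences converging to $y$ (Two's selections count as being in $\Gamma_{Y,y}$ iff they converge to $y$). Games: in $G_1(\mathcal E,\mathcal C)$, at each inning $n\in\omega$ One plays $E_n\in\mathcal E$ and Two picks $x_n\in E_n$; Two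 wins iff $\{x_n:n\in\omega\}\in\mathcal C$; $\neg\mathcal C$ is the complement of $\mathcal C$. Strategies for One map finite sequences of Two's moves to moves; predetermined strategies depend only on the inning number. Strategies for Two map finite sequences of One's moves to an element of the last one; Markov strategies depend only on One's last move and the inning number. $\mathrm{I}\uparrow G$, $\mathrm{I}\underset{\mathrm{pre}}{\uparrow}G$, $\mathrm{II}\uparrow G$, $\mathrm{II}\underset{\mathrm{mark}}{\uparrow}G$ denote existence of a winning strategy / winning predetermined strategy for One / winning strategy / winning Markov strategy for Two. $G\le_{\mathrm{II}}H$ means: $\mathrm{II}\underset{\mathrm{mark}}{\uparrow}G\Rightarrow\mathrm{II}\underset{\mathrm{mark}}{\uparrow}H$, $\mathrm{II}\uparrow G\Rightarrow\mathrm{II}\uparrow H$, $\mathrm{I}\not\uparrow G\Rightarrow\mathrm{I}\not\uparrow H$, and $\mathrm{I}\not\underset{\mathrm{pre}}{\uparrow}G\Rightarrow\mathrm{I}\not\underset{\mathrm{pre}}{\uparrow}H$; $G,H$ are equivalent if $G\le_{\mathrm{II}}H$ and $H\le_{\mathrm{II}}G$. $G,H$ are dual if $\mathrm{I}\uparrow G\iff\mathrm{II}\uparrow H$, $\mathrm{I}\uparrow H\iff\mathrm{II}\uparrow G$, $\mathrm{I}\underset{\mathrm{pre}}{\uparrow}G\iff\mathrm{II}\underset{\mathrm{mark}}{\uparrow}H$, and $\mathrm{I}\underset{\mathrm{pre}}{\uparrow}H\iff\mathrm{II}\underset{\mathrm{mark}}{\uparrow}G$. Two games are equivalent for player One if One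 has a winning strategy in one iff in the other, and a winning predetermined strategy in one iff in the other; equivalent for player Two if Two has a winning strategy in one iff in the other, and a winning Markov strategy in one iff in the other. $\mathrm{cof}(\mathcal E;\mathcal F,\le)$ is the least cardinal $\kappa$ such that some $\{E_\alpha:\alpha<\kappa\}\subseteq\mathcal E$ has every $F\in\mathcal F$ satisfying $F\le E_\alpha$ for some $\alpha$; here $\le$ is $\supseteq$ on sets of functions. *)

theory Defs
  imports "HOL-Analysis.Analysis"
begin

text \<open>A game G_1 is given by the collection of One's possible moves and by the
  winning condition for Two on the sequence of Two's selections.\<close>

type_synonym 'b game = "'b set set \<times> ((nat \<Rightarrow> 'b) \<Rightarrow> bool)"

definition G1 :: "'b set set \<Rightarrow> 'b set set \<Rightarrow> 'b game" where
  "G1 E C = (E, \<lambda>x. range x \<in> C)"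

definition G1_neg :: "'b set set \<Rightarrow> 'b set set \<Rightarrow> 'b game" where
  "G1_neg E C = (E, \<lambda>x. range x \<notin> C)"

definition I_wins :: "'b game \<Rightarrow> bool" where
  "I_wins G \<longleftrightarrow> (\<exists>\<sigma> :: 'b list \<Rightarrow> 'b set.
      (\<forall>ls. \<sigma> ls \<in> fst G) \<and>
      (\<forall>x. (\<forall>n. x n \<in> \<sigma> (map x [0..<n])) \<longrightarrow> \<not> snd G x))"

definition I_pre_wins :: "'b game \<Rightarrow> bool" where
  "I_pre_wins G \<longleftrightarrow> (\<exists>Es :: nat \<Rightarrow> 'b set.
      (\<forall>n. Es n \<in> fst G) \<and>
      (\<forall>x. (\<forall>n. x n \<in> Es n) \<longrightarrow> \<not> snd G x))"

definition II_wins :: "'b game \<Rightarrow> bool" where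
  "II_wins G \<longleftrightarrow> (\<exists>\<tau> :: 'b set list \<Rightarrow> 'b.
      (\<forall>ls. ls \<noteq> [] \<and> set ls \<subseteq> fst G \<longrightarrow> \<tau> ls \<in> last ls) \<and>
      (\<forall>Es. (\<forall>n. Es n \<in> fst G) \<longrightarrow> snd G (\<lambda>n. \<tau> (map Es [0..<Suc n]))))"

definition II_mark_wins :: "'b game \<Rightarrow> bool" where
  "II_mark_wins G \<longleftrightarrow> (\<exists>\<tau> :: 'b set \<Rightarrow> nat \<Rightarrow> 'b.
      (\<forall>E n. E \<in> fst G \<longrightarrow> \<tau> E n \<in> E) \<and>
      (\<forall>Es. (\<forall>n. Es n \<in> fst G) \<longrightarrow> snd G (\<lambda>n. \<tau> (Es n) n)))"

definition game_le_II :: "'b game \<Rightarrow> 'c game \<Rightarrow> bool" where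
  "game_le_II G H \<longleftrightarrow>
     (II_mark_wins G \<longrightarrow> II_mark_wins H) \<and>
     (II_wins G \<longrightarrow> II_wins H) \<and>
     (\<not> I_wins G \<longrightarrow> \<not> I_wins H) \<and>
     (\<not> I_pre_wins G \<longrightarrow> \<not> I_pre_wins H)"

definition game_equiv :: "'b game \<Rightarrow> 'c game \<Rightarrow> bool" where
  "game_equiv G H \<longleftrightarrow> game_le_II G H \<and> game_le_II H G"

definition game_dual :: "'b game \<Rightarrow> 'c game \<Rightarrow> bool" where
  "game_dual G H \<longleftrightarrow>
     (I_wins G \<longleftrightarrow> II_wins H) \<and>
     (I_wins H \<longleftrightarrow> II_wins G) \<and>
     (I_pre_wins G \<longleftrightarrow> II_mark_wins H) \<and>
     (I_pre_wins H \<longleftrightarrow> II_mark_wins G)"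

definition game_equiv_One :: "'b game \<Rightarrow> 'c game \<Rightarrow> bool" where
  "game_equiv_One G H \<longleftrightarrow>
     (I_wins G \<longleftrightarrow> I_wins H) \<and> (I_pre_wins G \<longleftrightarrow> I_pre_wins H)"

definition game_equiv_Two :: "'b game \<Rightarrow> 'c game \<Rightarrow> bool" where
  "game_equiv_Two G H \<longleftrightarrow>
     (II_wins G \<longleftrightarrow> II_wins H) \<and> (II_mark_wins G \<longleftrightarrow> II_mark_wins H)"

definition Tychonoff_space :: "'a topology \<Rightarrow> bool" where
  "Tychonoff_space X \<longleftrightarrow> completely_regular_space X \<and> Hausdorff_space X"

definition sigma_compact_space :: "'a topology \<Rightarrow> bool" where
  "sigma_compact_space X \<longleftrightarrow>
     (\<exists>K :: nat \<Rightarrow> 'a set. (\<forall>n. compactin X (K n)) \<and> \<Union>(range K) = topspace X)"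

definition cpt_sets :: "'a topology \<Rightarrow> 'a set set" where
  "cpt_sets X = {K. compactin X K \<and> K \<noteq> {}}"

definition open_covers :: "'a topology \<Rightarrow> 'a set set set" where
  "open_covers X = {\<U>. (\<forall>U\<in>\<U>. openin X U) \<and> \<Union>\<U> = topspace X}"

definition omega_covers :: "'a topology \<Rightarrow> 'a set set set" where
  "omega_covers X = {\<U> \<in> open_covers X. topspace X \<notin> \<U> \<and>
      (\<forall>F. finite F \<and> F \<subseteq> topspace X \<longrightarrow> (\<exists>U\<in>\<U>. F \<subseteq> U))}"

definition k_covers :: "'a topology \<Rightarrow> 'a set set set" where
  "k_covers X = {\<U> \<in> open_covers X. topspace X \<notin> \<U> \<and>
      (\<forall>K. compactin X K \<longrightarrow> (\<exists>U\<in>\<U>. K \<subseteq> U))}"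

definition gamma_covers :: "'a topology \<Rightarrow> 'a set set set" where
  "gamma_covers X = {\<U> \<in> open_covers X. infinite \<U> \<and> topspace X \<notin> \<U> \<and>
      (\<forall>F. finite F \<and> F \<subseteq> topspace X \<longrightarrow> finite {U\<in>\<U>. \<not> F \<subseteq> U})}"

definition nbhds_of_set :: "'a topology \<Rightarrow> 'a set \<Rightarrow> 'a set set" where
  "nbhds_of_set X K = {U. openin X U \<and> U \<noteq> topspace X \<and> K \<subseteq> U}"

definition nbhds_cpt :: "'a topology \<Rightarrow> 'a set set set" where
  "nbhds_cpt X = nbhds_of_set X ` cpt_sets X"

definition nbhds_pt :: "'b topology \<Rightarrow> 'b \<Rightarrow> 'b set set" where
  "nbhds_pt Y y = {U. openin Y U \<and> y \<in> U}"

definition nonempty_opens :: "'b topology \<Rightarrow> 'b set set" where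
  "nonempty_opens Y = {U. openin Y U \<and> U \<noteq> {}}"

definition dense_sets :: "'b topology \<Rightarrow> 'b set set" where
  "dense_sets Y = {D. D \<subseteq> topspace Y \<and> Y closure_of D = topspace Y}"

definition closed_discrete_sets :: "'b topology \<Rightarrow> 'b set set" where
  "closed_discrete_sets Y = {S. S \<subseteq> topspace Y \<and> closedin Y S \<and>
      (\<forall>s\<in>S. \<exists>U. openin Y U \<and> U \<inter> S = {s})}"

definition clustering_sets :: "'b topology \<Rightarrow> 'b \<Rightarrow> 'b set set" where
  "clustering_sets Y y = {S. S \<subseteq> topspace Y \<and> y \<in> Y closure_of S}"

text \<open>C(X): continuous real functions on X, normalised to be 0 outside the
  carrier so that each continuous function has a unique representative.\<close>
definition Cfun :: "'a topology \<Rightarrow> ('a \<Rightarrow> real) set" where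
  "Cfun X = {f. continuous_map X euclideanreal f \<and> (\<forall>x. x \<notin> topspace X \<longrightarrow> f x = 0)}"

definition basic_nbhd :: "'a topology \<Rightarrow> ('a \<Rightarrow> real) \<Rightarrow> 'a set \<Rightarrow> real \<Rightarrow> ('a \<Rightarrow> real) set" where
  "basic_nbhd X f A \<epsilon> = {g \<in> Cfun X. \<forall>x\<in>A. \<bar>f x - g x\<bar> < \<epsilon>}"

definition Cp :: "'a topology \<Rightarrow> ('a \<Rightarrow> real) topology" where
  "Cp X = topology_generated_by
     {basic_nbhd X f A \<epsilon> | f A \<epsilon>. f \<in> Cfun X \<and> finite A \<and> A \<subseteq> topspace X \<and> \<epsilon> > 0}"

definition Ck :: "'a topology \<Rightarrow> ('a \<Rightarrow> real) topology" where
  "Ck X = topology_generated_by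
     {basic_nbhd X f A \<epsilon> | f A \<epsilon>. f \<in> Cfun X \<and> compactin X A \<and> \<epsilon> > 0}"

definition zero_fun :: "'a \<Rightarrow> real" where
  "zero_fun = (\<lambda>_. 0)"

definition cofinal_family :: "'b set set \<Rightarrow> 'b set set \<Rightarrow> 'b set set \<Rightarrow> bool" where
  "cofinal_family \<E> \<F> \<A> \<longleftrightarrow> \<A> \<subseteq> \<E> \<and> (\<forall>F\<in>\<F>. \<exists>E\<in>\<A>. E \<subseteq> F)"

definition cof_is_omega :: "'b set set \<Rightarrow> 'b set set \<Rightarrow> bool" where
  "cof_is_omega \<E> \<F> \<longleftrightarrow>
     (\<exists>\<A>. countable \<A> \<and> cofinal_family \<E> \<F> \<A>) \<and>
     \<not> (\<exists>\<A>. finite \<A> \<and> cofinal_family \<E> \<F> \<A>)"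

end

theory Submission
  imports Defs
begin

lemma translation:
  fixes G :: "'b game" and H :: "'c game" and Ir :: "nat \<Rightarrow> 'c set \<Rightarrow> 'b set" and IIr :: "nat \<Rightarrow> 'b \<Rightarrow> 'c set \<Rightarrow> 'c"
  assumes I2: "\<And>n a. a \<in> fst H \<Longrightarrow> Ir n a \<in> fst G"
    and II1: "\<And>n a b. a \<in> fst H \<Longrightarrow> b \<in> Ir n a \<Longrightarrow> IIr n b a \<in> a"
    and W: "\<And>a b. (\<forall>n. a n \<in> fst H) \<Longrightarrow> (\<forall>n. b n \<in> Ir n (a n)) \<Longrightarrow> snd G b
              \<Longrightarrow> snd H (\<lambda>n. IIr n (b n) (a n))"
  shows "game_le_II G H"
  unfolding game_le_II_def
proof (intro conjI impI)
  assume "II_mark_wins G"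
  then obtain \<tau> where t1: "\<forall>E n. E \<in> fst G \<longrightarrow> \<tau> E n \<in> E"
    and t2: "\<forall>Es. (\<forall>n. Es n \<in> fst G) \<longrightarrow> snd G (\<lambda>n. \<tau> (Es n) n)"
    unfolding II_mark_wins_def by blast
  show "II_mark_wins H" unfolding II_mark_wins_def
  proof (rule exI[of _ "\<lambda>a n. IIr n (\<tau> (Ir n a) n) a"], intro conjI allI impI)
    fix E n assume E: "E \<in> fst H"
    have "Ir n E \<in> fst G" using I2 E .
    then have "\<tau> (Ir n E) n \<in> Ir n E" using t1 by simp
    then show "IIr n (\<tau> (Ir n E) n) E \<in> E" using II1 E by simp
  next
    fix Es :: "nat \<Rightarrow> 'c set" assume a: "\<forall>n. Es n \<in> fst H"
    have IG: "\<forall>n. Ir n (Es n) \<in> fst G" using I2 a by simp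
    have "snd G (\<lambda>n. \<tau> (Ir n (Es n)) n)" using t2 IG by simp
    moreover have "\<forall>n. \<tau> (Ir n (Es n)) n \<in> Ir n (Es n)" using t1 IG by simp
    ultimately show "snd H (\<lambda>n. IIr n (\<tau> (Ir n (Es n)) n) (Es n))"
      using W[OF a] by simp
  qed
next
  assume "II_wins G"
  then obtain \<tau> where t1: "\<forall>ls. ls \<noteq> [] \<and> set ls \<subseteq> fst G \<longrightarrow> \<tau> ls \<in> last ls"
    and t2: "\<forall>Es. (\<forall>n. Es n \<in> fst G) \<longrightarrow> snd G (\<lambda>n. \<tau> (map Es [0..<Suc n]))"
    unfolding II_wins_def by blast
  define trl where "trl = (\<lambda>ls. map (\<lambda>i. Ir i (ls!i)) [0..<length ls])"
  have trl_map0: "trl (map Es [0..<m]) = map (\<lambda>i. Ir i (Es i)) [0..<m]" for Es m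
    unfolding trl_def by (intro map_cong) auto
  have trl_map: "trl (map Es [0..<Suc n]) = map (\<lambda>i. Ir i (Es i)) [0..<Suc n]" for Es n
    using trl_map0 by blast
  show "II_wins H" unfolding II_wins_def
  proof (rule exI[of _ "\<lambda>ls. IIr (length ls - 1) (\<tau> (trl ls)) (last ls)"], intro conjI allI impI)
    fix ls :: "'c set list" assume ls: "ls \<noteq> [] \<and> set ls \<subseteq> fst H"
    have "trl ls \<noteq> []" using ls unfolding trl_def by auto
    moreover have "set (trl ls) \<subseteq> fst G" using ls I2 unfolding trl_def by (auto intro!: I2 simp: subset_iff)
    moreover have "last (trl ls) = Ir (length ls - 1) (last ls)"
      using ls unfolding trl_def by (simp add: last_map last_conv_nth)
    ultimately have "\<tau> (trl ls) \<in> Ir (length ls - 1) (last ls)" using t1 by metis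
    then show "IIr (length ls - 1) (\<tau> (trl ls)) (last ls) \<in> last ls"
      using II1 ls by (simp add: last_in_set subset_iff)
  next
    fix Es :: "nat \<Rightarrow> 'c set" assume a: "\<forall>n. Es n \<in> fst H"
    have IG: "\<forall>n. Ir n (Es n) \<in> fst G" using I2 a by simp
    have 1: "snd G (\<lambda>n. \<tau> (map (\<lambda>i. Ir i (Es i)) [0..<Suc n]))" using t2 IG by simp
    have 2: "\<forall>n. \<tau> (map (\<lambda>i. Ir i (Es i)) [0..<Suc n]) \<in> Ir n (Es n)"
    proof
      fix n
      have "\<tau> (map (\<lambda>i. Ir i (Es i)) [0..<Suc n]) \<in> last (map (\<lambda>i. Ir i (Es i)) [0..<Suc n])"
      proof -
        have s: "set (map (\<lambda>i. Ir i (Es i)) [0..<Suc n]) \<subseteq> fst G" using IG by auto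
        have ne: "map (\<lambda>i. Ir i (Es i)) [0..<Suc n] \<noteq> []" by (simp del: upt_Suc)
        show ?thesis using t1 s ne by blast
      qed
      then show "\<tau> (map (\<lambda>i. Ir i (Es i)) [0..<Suc n]) \<in> Ir n (Es n)" by simp
    qed
    have "snd H (\<lambda>n. IIr n (\<tau> (map (\<lambda>i. Ir i (Es i)) [0..<Suc n])) (Es n))"
      using W[OF a 2 1] .
    show "snd H (\<lambda>n. IIr (length (map Es [0..<Suc n]) - 1) (\<tau> (trl (map Es [0..<Suc n]))) (last (map Es [0..<Suc n])))"
    proof -
      have lastm: "last (map Es [0..<Suc n]) = Es n" for n by simp
      show ?thesis using \<open>snd H _\<close> by (simp add: trl_map lastm del: upt_Suc)
    qed
  qed
next
  assume nI: "\<not> I_wins G"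
  show "\<not> I_wins H"
  proof
    assume "I_wins H"
    then obtain \<sigma> where s1: "\<forall>ls. \<sigma> ls \<in> fst H"
      and s2: "\<forall>x. (\<forall>n. x n \<in> \<sigma> (map x [0..<n])) \<longrightarrow> \<not> snd H x"
      unfolding I_wins_def by blast
    define hist where "hist = foldl (\<lambda>cs b. cs @ [IIr (length cs) b (\<sigma> cs)]) []"
    define \<sigma>' where "\<sigma>' = (\<lambda>bs. Ir (length bs) (\<sigma> (hist bs)))"
    have "I_wins G" unfolding I_wins_def
    proof (rule exI[of _ \<sigma>'], intro conjI allI impI)
      fix ls show "\<sigma>' ls \<in> fst G" unfolding \<sigma>'_def using I2 s1 by blast
    next
      fix x assume x: "\<forall>n. x n \<in> \<sigma>' (map x [0..<n])"
      define c where "c = (\<lambda>n. IIr n (x n) (\<sigma> (hist (map x [0..<n]))))"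
      have h: "hist (map x [0..<n]) = map c [0..<n]" for n
      proof (induction n)
        case 0 then show ?case by (simp add: hist_def)
      next
        case (Suc n)
        have "hist (map x [0..<Suc n]) = hist (map x [0..<n]) @ [IIr (length (hist (map x [0..<n]))) (x n) (\<sigma> (hist (map x [0..<n])))]"
          by (simp add: hist_def)
        also have "\<dots> = map c [0..<Suc n]" using Suc by (simp add: c_def)
        finally show ?case .
      qed
      have xa: "\<forall>n. x n \<in> Ir n (\<sigma> (map c [0..<n]))" using x h unfolding \<sigma>'_def by simp
      have aH: "\<forall>n. \<sigma> (map c [0..<n]) \<in> fst H" using s1 by blast
      have ceq: "c n = IIr n (x n) (\<sigma> (map c [0..<n]))" for n
        by (subst h[symmetric]) (simp add: c_def)
      have cplay: "\<forall>n. c n \<in> \<sigma> (map c [0..<n])"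
        using II1 xa aH ceq by metis
      show "\<not> snd G x"
      proof
        assume sG: "snd G x"
        have "snd H (\<lambda>n. IIr n (x n) (\<sigma> (map c [0..<n])))" using W[OF aH xa sG] .
        moreover have "(\<lambda>n. IIr n (x n) (\<sigma> (map c [0..<n]))) = c" using ceq by (intro ext) simp
        ultimately have "snd H c" by simp
        then show False using s2 cplay by blast
      qed
    qed
    then show False using nI by blast
  qed
next
  assume nI: "\<not> I_pre_wins G"
  show "\<not> I_pre_wins H"
  proof
    assume "I_pre_wins H"
    then obtain Es where e1: "\<forall>n. Es n \<in> fst H"
      and e2: "\<forall>x. (\<forall>n. x n \<in> Es n) \<longrightarrow> \<not> snd H x"
      unfolding I_pre_wins_def by blast
    have "I_pre_wins G" unfolding I_pre_wins_def
    proof (rule exI[of _ "\<lambda>n. Ir n (Es n)"], intro conjI allI impI)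
      fix n show "Ir n (Es n) \<in> fst G" using I2 e1 by blast
    next
      fix x assume x: "\<forall>n. x n \<in> Ir n (Es n)"
      show "\<not> snd G x"
      proof
        assume sG: "snd G x"
        have "snd H (\<lambda>n. IIr n (x n) (Es n))" using W[OF e1 x sG] .
        moreover have "\<forall>n. IIr n (x n) (Es n) \<in> Es n" using II1 e1 x by blast
        ultimately show False using e2[rule_format, of "\<lambda>n. IIr n (x n) (Es n)"] by blast
      qed
    qed
    then show False using nI by blast
  qed
qed


lemma G1_simps[simp]: "fst (G1 E C) = E" "snd (G1 E C) x \<longleftrightarrow> range x \<in> C"
  "fst (G1_neg E C) = E" "snd (G1_neg E C) x \<longleftrightarrow> range x \<notin> C"
  by (simp_all add: G1_def G1_neg_def)

lemma two_from_one:
  fixes \<sigma> :: "'b list \<Rightarrow> 'b set" and M1 M2 :: "'b set set"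
  assumes meet: "\<And>U N. U \<in> M2 \<Longrightarrow> N \<in> M1 \<Longrightarrow> U \<inter> N \<noteq> {}"
    and s1: "\<forall>ls. \<sigma> ls \<in> M1"
    and s2: "\<forall>x. (\<forall>n. x n \<in> \<sigma> (map x [0..<n])) \<longrightarrow> P x"
  shows "\<exists>\<tau>. (\<forall>ls. ls \<noteq> [] \<and> set ls \<subseteq> M2 \<longrightarrow> \<tau> ls \<in> last ls) \<and>
             (\<forall>Es. (\<forall>n. Es n \<in> M2) \<longrightarrow> P (\<lambda>n. \<tau> (map Es [0..<Suc n])))"
proof -
  define sim where "sim = foldl (\<lambda>h U. h @ [SOME u. u \<in> U \<inter> \<sigma> h]) []"
  have simS: "sim (ls @ [U]) = sim ls @ [SOME u. u \<in> U \<inter> \<sigma> (sim ls)]" for ls U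
    by (simp add: sim_def)
  have pick: "(SOME u. u \<in> U \<inter> \<sigma> h) \<in> U \<inter> \<sigma> h" if "U \<in> M2" for U h
  proof -
    have "U \<inter> \<sigma> h \<noteq> {}" using meet[OF that] s1 by blast
    then show ?thesis by (metis (no_types, lifting) ex_in_conv someI_ex)
  qed
  show ?thesis
  proof (rule exI[of _ "\<lambda>ls. last (sim ls)"], intro conjI allI impI)
    fix ls :: "'b set list" assume ls: "ls \<noteq> [] \<and> set ls \<subseteq> M2"
    then have eq: "ls = butlast ls @ [last ls]" by simp
    have "last ls \<in> M2" using ls by auto
    then have "(SOME u. u \<in> last ls \<inter> \<sigma> (sim (butlast ls))) \<in> last ls" using pick by blast
    then show "last (sim ls) \<in> last ls" by (subst eq) (simp only: simS last_snoc)
  next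
    fix Es :: "nat \<Rightarrow> 'b set" assume Es: "\<forall>n. Es n \<in> M2"
    define x where "x = (\<lambda>n. SOME u. u \<in> Es n \<inter> \<sigma> (sim (map Es [0..<n])))"
    have h: "sim (map Es [0..<n]) = map x [0..<n]" for n
    proof (induction n)
      case 0 then show ?case by (simp add: sim_def)
    next
      case (Suc n)
      have "sim (map Es [0..<Suc n]) = sim (map Es [0..<n]) @ [x n]"
        by (simp add: simS x_def)
      then show ?case using Suc by simp
    qed
    have xl: "last (sim (map Es [0..<Suc n])) = x n" for n using h[of "Suc n"] by simp
    have "x n \<in> \<sigma> (map x [0..<n])" for n
      using pick[OF Es[rule_format, of n], of "sim (map Es [0..<n])"] h[of n] unfolding x_def by simp
    then have "P x" using s2 by blast
    then show "P (\<lambda>n. last (sim (map Es [0..<Suc n])))" using xl by simp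
  qed
qed

lemma one_from_two:
  fixes \<tau> :: "'c set list \<Rightarrow> 'c" and M1 M2 :: "'c set set"
  assumes key: "\<And>ls. set ls \<subseteq> M2 \<Longrightarrow> \<exists>N\<in>M1. \<forall>u\<in>N. \<exists>U\<in>M2. \<tau> (ls @ [U]) = u"
    and win: "\<forall>Es. (\<forall>n. Es n \<in> M2) \<longrightarrow> P (\<lambda>n. \<tau> (map Es [0..<Suc n]))"
  shows "\<exists>\<sigma>. (\<forall>ls. \<sigma> ls \<in> M1) \<and> (\<forall>x. (\<forall>n. x n \<in> \<sigma> (map x [0..<n])) \<longrightarrow> P x)"
proof -
  define cov where "cov = foldl (\<lambda>c u. c @ [SOME U. U \<in> M2 \<and> \<tau> (c @ [U]) = u]) []"
  have covS: "cov (h @ [u]) = cov h @ [SOME U. U \<in> M2 \<and> \<tau> (cov h @ [U]) = u]" for h u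
    by (simp add: cov_def)
  define \<sigma> where "\<sigma> = (\<lambda>h. SOME N. N \<in> M1 \<and> (set (cov h) \<subseteq> M2 \<longrightarrow> (\<forall>u\<in>N. \<exists>U\<in>M2. \<tau> (cov h @ [U]) = u)))"
  have sig: "\<sigma> h \<in> M1 \<and> (set (cov h) \<subseteq> M2 \<longrightarrow> (\<forall>u\<in>\<sigma> h. \<exists>U\<in>M2. \<tau> (cov h @ [U]) = u))" for h
  proof -
    have "\<exists>N. N \<in> M1 \<and> (set (cov h) \<subseteq> M2 \<longrightarrow> (\<forall>u\<in>N. \<exists>U\<in>M2. \<tau> (cov h @ [U]) = u))"
    proof (cases "set (cov h) \<subseteq> M2")
      case True then show ?thesis using key by blast
    next
      case False
      obtain N where "N \<in> M1" using key[of "[]"] by auto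
      then show ?thesis using False by blast
    qed
    then show ?thesis unfolding \<sigma>_def by (rule someI_ex)
  qed
  show ?thesis
  proof (rule exI[of _ \<sigma>], intro conjI allI impI)
    fix ls show "\<sigma> ls \<in> M1" using sig by blast
  next
    fix x assume x: "\<forall>n. x n \<in> \<sigma> (map x [0..<n])"
    define Us where "Us = (\<lambda>n. SOME U. U \<in> M2 \<and> \<tau> (cov (map x [0..<n]) @ [U]) = x n)"
    have claim: "cov (map x [0..<n]) = map Us [0..<n] \<and> (\<forall>i<n. Us i \<in> M2 \<and> \<tau> (map Us [0..<Suc i]) = x i)" for n
    proof (induction n)
      case 0 then show ?case by (simp add: cov_def)
    next
      case (Suc n)
      then have c: "cov (map x [0..<n]) = map Us [0..<n]" and old: "\<forall>i<n. Us i \<in> M2 \<and> \<tau> (map Us [0..<Suc i]) = x i"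
        by auto
      have "set (cov (map x [0..<n])) \<subseteq> M2" using c old by auto
      then have "\<exists>U. U \<in> M2 \<and> \<tau> (cov (map x [0..<n]) @ [U]) = x n" using sig x by blast
      from someI_ex[OF this] have new: "Us n \<in> M2 \<and> \<tau> (cov (map x [0..<n]) @ [Us n]) = x n"
        unfolding Us_def .
      have c2: "cov (map x [0..<Suc n]) = map Us [0..<Suc n]"
        using c by (simp add: covS Us_def)
      show ?case using c2 old new c by (auto simp: less_Suc_eq)
    qed
    have "\<forall>n. Us n \<in> M2" using claim by blast
    then have "P (\<lambda>n. \<tau> (map Us [0..<Suc n]))" using win by blast
    moreover have "(\<lambda>n. \<tau> (map Us [0..<Suc n])) = x" using claim by (intro ext) blast
    ultimately show "P x" by simp
  qed
qed

lemma mark_from_pre: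
  fixes Es :: "nat \<Rightarrow> 'a set"
  assumes meet: "\<And>U N. U \<in> M2 \<Longrightarrow> N \<in> M1 \<Longrightarrow> U \<inter> N \<noteq> {}"
    and e1: "\<forall>n. Es n \<in> M1" and e2: "\<forall>x. (\<forall>n. x n \<in> Es n) \<longrightarrow> P x"
  shows "\<exists>\<tau>. (\<forall>E n. E \<in> M2 \<longrightarrow> \<tau> E n \<in> E) \<and> (\<forall>Es'. (\<forall>n. Es' n \<in> M2) \<longrightarrow> P (\<lambda>n. \<tau> (Es' n) n))"
proof -
  have pick: "(SOME u. u \<in> U \<inter> Es n) \<in> U \<inter> Es n" if "U \<in> M2" for U n
  proof -
    have "U \<inter> Es n \<noteq> {}" using meet[OF that] e1 by blast
    then show ?thesis by (metis (no_types, lifting) ex_in_conv someI_ex)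
  qed
  show ?thesis
  proof (rule exI[of _ "\<lambda>U n. SOME u. u \<in> U \<inter> Es n"], intro conjI allI impI)
    fix E n assume "E \<in> M2" then show "(SOME u. u \<in> E \<inter> Es n) \<in> E" using pick by blast
  next
    fix Es' :: "nat \<Rightarrow> 'a set" assume "\<forall>n. Es' n \<in> M2"
    then have "\<forall>n. (SOME u. u \<in> Es' n \<inter> Es n) \<in> Es n" using pick by blast
    then show "P (\<lambda>n. SOME u. u \<in> Es' n \<inter> Es n)" using e2[rule_format, of "\<lambda>n. SOME u. u \<in> Es' n \<inter> Es n"] by blast
  qed
qed

lemma pre_from_mark:
  assumes key: "\<And>n. \<exists>N\<in>M1. \<forall>u\<in>N. \<exists>U\<in>M2. \<tau> U n = u"
    and win: "\<forall>Es. (\<forall>n. Es n \<in> M2) \<longrightarrow> P (\<lambda>n. \<tau> (Es n) n)"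
  shows "\<exists>Es. (\<forall>n. Es n \<in> M1) \<and> (\<forall>x. (\<forall>n. x n \<in> Es n) \<longrightarrow> P x)"
proof -
  define Es where "Es = (\<lambda>n. SOME N. N \<in> M1 \<and> (\<forall>u\<in>N. \<exists>U\<in>M2. \<tau> U n = u))"
  have e: "Es n \<in> M1 \<and> (\<forall>u\<in>Es n. \<exists>U\<in>M2. \<tau> U n = u)" for n
  proof -
    have "\<exists>N. N \<in> M1 \<and> (\<forall>u\<in>N. \<exists>U\<in>M2. \<tau> U n = u)" using key[of n] by blast
    from someI_ex[OF this] show ?thesis unfolding Es_def .
  qed
  show ?thesis
  proof (rule exI[of _ Es], intro conjI allI impI)
    fix n show "Es n \<in> M1" using e by blast
  next
    fix x assume x: "\<forall>n. x n \<in> Es n"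
    have "\<forall>n. \<exists>U. U \<in> M2 \<and> \<tau> U n = x n" using e x by blast
    then obtain Us where Us: "\<forall>n. Us n \<in> M2 \<and> \<tau> (Us n) n = x n" by metis
    then have "P (\<lambda>n. \<tau> (Us n) n)" using win by blast
    moreover have "(\<lambda>n. \<tau> (Us n) n) = x" using Us by auto
    ultimately show "P x" by simp
  qed
qed

lemma duality:
  fixes E F C :: "'b set set"
  assumes R1: "\<And>U N. U \<in> F \<Longrightarrow> N \<in> E \<Longrightarrow> U \<inter> N \<noteq> {}"
    and R2: "\<And>f. (\<forall>N\<in>E. f N \<in> N) \<Longrightarrow> f ` E \<in> F"
  shows "game_dual (G1_neg E C) (G1 F C)"
  unfolding game_dual_def
proof (intro conjI iffI)
  assume "I_wins (G1_neg E C)"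
  then obtain \<sigma> where "\<forall>ls. \<sigma> ls \<in> E" "\<forall>x. (\<forall>n. x n \<in> \<sigma> (map x [0..<n])) \<longrightarrow> range x \<in> C"
    unfolding I_wins_def by auto
  from two_from_one[of F E, OF R1 this] show "II_wins (G1 F C)"
    unfolding II_wins_def by simp
next
  assume "II_wins (G1 F C)"
  then obtain \<tau> where t1: "\<forall>ls. ls \<noteq> [] \<and> set ls \<subseteq> F \<longrightarrow> \<tau> ls \<in> last ls"
    and t2: "\<forall>Es. (\<forall>n. Es n \<in> F) \<longrightarrow> range (\<lambda>n. \<tau> (map Es [0..<Suc n])) \<in> C"
    unfolding II_wins_def by auto
  have key: "\<exists>N\<in>E. \<forall>u\<in>N. \<exists>U\<in>F. \<tau> (ls @ [U]) = u" if ls: "set ls \<subseteq> F" for ls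
  proof (rule ccontr)
    assume "\<not> ?thesis"
    then have "\<forall>N\<in>E. \<exists>u\<in>N. \<forall>U\<in>F. \<tau> (ls @ [U]) \<noteq> u" by blast
    then obtain f where f: "\<forall>N\<in>E. f N \<in> N \<and> (\<forall>U\<in>F. \<tau> (ls @ [U]) \<noteq> f N)" by metis
    then have fE: "f ` E \<in> F" using R2 by blast
    then have "\<tau> (ls @ [f ` E]) \<in> f ` E" using t1[rule_format, of "ls @ [f ` E]"] ls by simp
    then show False using f fE by blast
  qed
  from one_from_two[of F E \<tau>, OF key] t2
  show "I_wins (G1_neg E C)" unfolding I_wins_def by simp
next
  assume "I_wins (G1 F C)"
  then obtain \<sigma> where "\<forall>ls. \<sigma> ls \<in> F" "\<forall>x. (\<forall>n. x n \<in> \<sigma> (map x [0..<n])) \<longrightarrow> range x \<notin> C"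
    unfolding I_wins_def by auto
  moreover have "\<And>U N. U \<in> E \<Longrightarrow> N \<in> F \<Longrightarrow> U \<inter> N \<noteq> {}" using R1 by (metis inf_commute)
  ultimately have "\<exists>\<tau>. (\<forall>ls. ls \<noteq> [] \<and> set ls \<subseteq> E \<longrightarrow> \<tau> ls \<in> last ls) \<and>
             (\<forall>Es. (\<forall>n. Es n \<in> E) \<longrightarrow> range (\<lambda>n. \<tau> (map Es [0..<Suc n])) \<notin> C)"
    using two_from_one[of E F \<sigma> "\<lambda>x. range x \<notin> C"] by blast
  then show "II_wins (G1_neg E C)" unfolding II_wins_def by simp
next
  assume "II_wins (G1_neg E C)"
  then obtain \<tau> where t1: "\<forall>ls. ls \<noteq> [] \<and> set ls \<subseteq> E \<longrightarrow> \<tau> ls \<in> last ls"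
    and t2: "\<forall>Es. (\<forall>n. Es n \<in> E) \<longrightarrow> range (\<lambda>n. \<tau> (map Es [0..<Suc n])) \<notin> C"
    unfolding II_wins_def by auto
  have key: "\<exists>N\<in>F. \<forall>u\<in>N. \<exists>U\<in>E. \<tau> (ls @ [U]) = u" if ls: "set ls \<subseteq> E" for ls
  proof -
    have "\<forall>N\<in>E. \<tau> (ls @ [N]) \<in> N" proof
      fix N assume "N \<in> E"
      then show "\<tau> (ls @ [N]) \<in> N" using t1[rule_format, of "ls @ [N]"] ls by simp
    qed
    then have "(\<lambda>N. \<tau> (ls @ [N])) ` E \<in> F" by (rule R2)
    then show ?thesis by (intro bexI[of _ "(\<lambda>N. \<tau> (ls @ [N])) ` E"]) auto
  qed
  from one_from_two[of E F \<tau>, OF key] t2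
  show "I_wins (G1 F C)" unfolding I_wins_def by simp
next
  assume "I_pre_wins (G1_neg E C)"
  then obtain Es :: "nat \<Rightarrow> 'b set" where "\<forall>n. Es n \<in> E" "\<forall>x. (\<forall>n. x n \<in> Es n) \<longrightarrow> range x \<in> C"
    unfolding I_pre_wins_def by auto
  from mark_from_pre[of F E, OF R1 this] show "II_mark_wins (G1 F C)"
    unfolding II_mark_wins_def by simp
next
  assume "II_mark_wins (G1 F C)"
  then obtain \<tau> :: "'b set \<Rightarrow> nat \<Rightarrow> 'b" where t1: "\<forall>U n. U \<in> F \<longrightarrow> \<tau> U n \<in> U"
    and t2: "\<forall>Es. (\<forall>n. Es n \<in> F) \<longrightarrow> range (\<lambda>n. \<tau> (Es n) n) \<in> C"
    unfolding II_mark_wins_def by auto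
  have key: "\<exists>N\<in>E. \<forall>u\<in>N. \<exists>U\<in>F. \<tau> U n = u" for n
  proof (rule ccontr)
    assume "\<not> ?thesis"
    then have "\<forall>N\<in>E. \<exists>u\<in>N. \<forall>U\<in>F. \<tau> U n \<noteq> u" by blast
    then obtain f where f: "\<forall>N\<in>E. f N \<in> N \<and> (\<forall>U\<in>F. \<tau> U n \<noteq> f N)" by metis
    then have fE: "f ` E \<in> F" using R2 by blast
    then have "\<tau> (f ` E) n \<in> f ` E" using t1 by auto
    then show False using f fE by blast
  qed
  from pre_from_mark[of E F \<tau>, OF key] t2
  show "I_pre_wins (G1_neg E C)" unfolding I_pre_wins_def by simp
next
  assume "I_pre_wins (G1 F C)"
  then obtain Es :: "nat \<Rightarrow> 'b set" where "\<forall>n. Es n \<in> F" "\<forall>x. (\<forall>n. x n \<in> Es n) \<longrightarrow> range x \<notin> C"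
    unfolding I_pre_wins_def by auto
  moreover have m: "\<And>U N. U \<in> E \<Longrightarrow> N \<in> F \<Longrightarrow> U \<inter> N \<noteq> {}" using R1 by (metis inf_commute)
  ultimately show "II_mark_wins (G1_neg E C)" unfolding II_mark_wins_def
    using mark_from_pre[of E F Es "\<lambda>x. range x \<notin> C", OF m] by simp
next
  assume "II_mark_wins (G1_neg E C)"
  then obtain \<tau> :: "'b set \<Rightarrow> nat \<Rightarrow> 'b" where t1: "\<forall>U n. U \<in> E \<longrightarrow> \<tau> U n \<in> U"
    and t2: "\<forall>Es. (\<forall>n. Es n \<in> E) \<longrightarrow> range (\<lambda>n. \<tau> (Es n) n) \<notin> C"
    unfolding II_mark_wins_def by auto
  have key: "\<exists>N\<in>F. \<forall>u\<in>N. \<exists>U\<in>E. \<tau> U n = u" for n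
  proof -
    have "(\<lambda>N. \<tau> N n) ` E \<in> F" by (rule R2) (use t1 in simp)
    then show ?thesis by (intro bexI[of _ "(\<lambda>N. \<tau> N n) ` E"]) auto
  qed
  from pre_from_mark[of F E \<tau>, OF key] t2
  show "I_pre_wins (G1 F C)" unfolding I_pre_wins_def by simp
qed


lemma game_le_trans: "game_le_II A B \<Longrightarrow> game_le_II B C \<Longrightarrow> game_le_II A C"
  unfolding game_le_II_def by blast

lemma equiv_sym: "game_equiv A B \<Longrightarrow> game_equiv B A"
  unfolding game_equiv_def by blast

lemma equiv_trans: "game_equiv A B \<Longrightarrow> game_equiv B C \<Longrightarrow> game_equiv A C"
  unfolding game_equiv_def by (meson game_le_trans)

lemma dual_flip: "game_dual A B \<Longrightarrow> game_dual A' B' \<Longrightarrow> game_le_II A A' \<Longrightarrow> game_le_II B' B"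
  unfolding game_dual_def game_le_II_def by blast

lemma dual_equiv_left: "game_dual A B \<Longrightarrow> game_equiv A A' \<Longrightarrow> game_dual A' B"
  unfolding game_dual_def game_equiv_def game_le_II_def by blast

lemma dual_equiv_right: "game_dual A B \<Longrightarrow> game_equiv B B' \<Longrightarrow> game_dual A B'"
  unfolding game_dual_def game_equiv_def game_le_II_def by blast

lemma pre_imp_I: "I_pre_wins G \<Longrightarrow> I_wins G"
proof -
  assume "I_pre_wins G"
  then obtain Es where e1: "\<forall>n. Es n \<in> fst G" and e2: "\<forall>x. (\<forall>n. x n \<in> Es n) \<longrightarrow> \<not> snd G x"
    unfolding I_pre_wins_def by blast
  show "I_wins G" unfolding I_wins_def
  proof (rule exI[of _ "\<lambda>ls. Es (length ls)"], intro conjI allI impI)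
    fix ls show "Es (length ls) \<in> fst G" using e1 by blast
  next
    fix x assume "\<forall>n. x n \<in> Es (length (map x [0..<n]))"
    then have "\<forall>n. x n \<in> Es n" by simp
    then show "\<not> snd G x" using e2 by blast
  qed
qed

lemma pre_not_II: "I_pre_wins G \<Longrightarrow> \<not> II_wins G"
proof
  assume "I_pre_wins G" "II_wins G"
  then obtain Es where e1: "\<forall>n. Es n \<in> fst G" and e2: "\<forall>x. (\<forall>n. x n \<in> Es n) \<longrightarrow> \<not> snd G x"
    unfolding I_pre_wins_def by blast
  obtain \<tau> where t1: "\<forall>ls. ls \<noteq> [] \<and> set ls \<subseteq> fst G \<longrightarrow> \<tau> ls \<in> last ls"
    and t2: "\<forall>Es. (\<forall>n. Es n \<in> fst G) \<longrightarrow> snd G (\<lambda>n. \<tau> (map Es [0..<Suc n]))"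
    using \<open>II_wins G\<close> unfolding II_wins_def by blast
  have "\<forall>n. \<tau> (map Es [0..<Suc n]) \<in> Es n"
  proof
    fix n
    have "map Es [0..<Suc n] \<noteq> [] \<and> set (map Es [0..<Suc n]) \<subseteq> fst G" using e1 by (auto simp del: upt_Suc)
    then have "\<tau> (map Es [0..<Suc n]) \<in> last (map Es [0..<Suc n])" using t1[rule_format, of "map Es [0..<Suc n]"] by blast
    then show "\<tau> (map Es [0..<Suc n]) \<in> Es n" by simp
  qed
  then have "\<not> snd G (\<lambda>n. \<tau> (map Es [0..<Suc n]))" by (intro e2[rule_format]) simp
  moreover have "snd G (\<lambda>n. \<tau> (map Es [0..<Suc n]))" using t2 e1 by blast
  ultimately show False by blast
qed

lemma mark_imp_II: "II_mark_wins G \<Longrightarrow> II_wins G"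
proof -
  assume "II_mark_wins G"
  then obtain \<tau> where t1: "\<forall>E n. E \<in> fst G \<longrightarrow> \<tau> E n \<in> E"
      and t2: "\<forall>Es. (\<forall>n. Es n \<in> fst G) \<longrightarrow> snd G (\<lambda>n. \<tau> (Es n) n)"
    unfolding II_mark_wins_def by blast
  show "II_wins G" unfolding II_wins_def
  proof (rule exI[of _ "\<lambda>ls. \<tau> (last ls) (length ls - 1)"], intro conjI allI impI)
    fix ls :: "'a set list" assume "ls \<noteq> [] \<and> set ls \<subseteq> fst G"
    then have "last ls \<in> fst G" by auto
    then show "\<tau> (last ls) (length ls - 1) \<in> last ls" using t1 by blast
  next
    fix Es :: "nat \<Rightarrow> 'a set" assume "\<forall>n. Es n \<in> fst G"
    then show "snd G (\<lambda>n. \<tau> (last (map Es [0..<Suc n])) (length (map Es [0..<Suc n]) - 1))"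
      using t2 by simp
  qed
qed

lemma pre_le: "I_pre_wins A \<Longrightarrow> game_le_II A B"
proof -
  assume a: "I_pre_wins A"
  have "I_wins A" "\<not> II_wins A" using pre_imp_I[OF a] pre_not_II[OF a] by simp_all
  moreover have "\<not> II_mark_wins A" using mark_imp_II[of A] \<open>\<not> II_wins A\<close> by blast
  ultimately show ?thesis using a unfolding game_le_II_def by simp
qed

lemma dual_pre_B:
  assumes "game_dual A B" "I_pre_wins A"
  shows "II_mark_wins B" "II_wins B" "\<not> I_wins B" "\<not> I_pre_wins B"
proof -
  have a: "I_wins A" "\<not> II_wins A" using pre_imp_I[OF assms(2)] pre_not_II[OF assms(2)] by simp_all
  have b: "\<not> II_mark_wins A" using mark_imp_II[of A] a(2) by blast
  show "II_mark_wins B" using assms unfolding game_dual_def by simp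
  then show "II_wins B" by (rule mark_imp_II)
  show "\<not> I_wins B" using a assms(1) unfolding game_dual_def by simp
  show "\<not> I_pre_wins B" using b assms(1) unfolding game_dual_def by simp
qed

lemma B_le:
  assumes "II_mark_wins B'" "II_wins B'" "\<not> I_wins B'" "\<not> I_pre_wins B'"
  shows "game_le_II B B'"
  using assms unfolding game_le_II_def by blast

lemma sub_one_trivial:
  assumes "\<And>x. P x \<Longrightarrow> Q x"
  shows "I_wins (E, Q) \<Longrightarrow> I_wins (E, P)" "I_pre_wins (E, Q) \<Longrightarrow> I_pre_wins (E, P)"
proof -
  assume "I_wins (E, Q)"
  then obtain \<sigma> where "\<forall>ls. \<sigma> ls \<in> E" "\<forall>x. (\<forall>n. x n \<in> \<sigma> (map x [0..<n])) \<longrightarrow> \<not> Q x"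
    unfolding I_wins_def by auto
  then show "I_wins (E, P)" unfolding I_wins_def using assms by (intro exI[of _ \<sigma>]) auto
next
  assume "I_pre_wins (E, Q)"
  then obtain Es :: "nat \<Rightarrow> _" where "\<forall>n. Es n \<in> E" "\<forall>x. (\<forall>n. x n \<in> Es n) \<longrightarrow> \<not> Q x"
    unfolding I_pre_wins_def by auto
  then show "I_pre_wins (E, P)" unfolding I_pre_wins_def using assms by (intro exI[of _ Es]) auto
qed

lemma sub_one:
  fixes E :: "'b set set"
  assumes dir: "\<And>S. finite S \<Longrightarrow> S \<subseteq> E \<Longrightarrow> S \<noteq> {} \<Longrightarrow> \<exists>M\<in>E. \<forall>s\<in>S. M \<subseteq> s"
    and sub: "\<And>x. (\<forall>n. x n \<in> \<Union>E) \<Longrightarrow> Q x \<Longrightarrow> \<exists>r. strict_mono r \<and> P (x \<circ> r)"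
  shows "I_wins (E, P) \<Longrightarrow> I_wins (E, Q)" "I_pre_wins (E, P) \<Longrightarrow> I_pre_wins (E, Q)"
proof -
  assume "I_wins (E, P)"
  then obtain \<sigma> where s1: "\<forall>ls. \<sigma> ls \<in> E" and s2: "\<forall>x. (\<forall>n. x n \<in> \<sigma> (map x [0..<n])) \<longrightarrow> \<not> P x"
    unfolding I_wins_def by auto
  define L where "L = (\<lambda>h::'b list. {s. set s \<subseteq> set h \<and> length s \<le> length h})"
  define \<sigma>' where "\<sigma>' = (\<lambda>h. SOME M. M \<in> E \<and> (\<forall>s\<in>L h. M \<subseteq> \<sigma> s))"
  have sig': "\<sigma>' h \<in> E \<and> (\<forall>s\<in>L h. \<sigma>' h \<subseteq> \<sigma> s)" for h
  proof -
    have fin: "finite (\<sigma> ` L h)" unfolding L_def by (intro finite_imageI finite_lists_length_le) auto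
    have ne: "\<sigma> ` L h \<noteq> {}" unfolding L_def by auto
    obtain M where "M \<in> E" "\<forall>s\<in>\<sigma> ` L h. M \<subseteq> s" using dir[OF fin _ ne] s1 by blast
    then have "\<exists>M. M \<in> E \<and> (\<forall>s\<in>L h. M \<subseteq> \<sigma> s)" by blast
    from someI_ex[OF this] show ?thesis unfolding \<sigma>'_def .
  qed
  show "I_wins (E, Q)" unfolding I_wins_def
  proof (rule exI[of _ \<sigma>'], intro conjI allI impI)
    fix ls show "\<sigma>' ls \<in> fst (E, Q)" using sig' by simp
  next
    fix x assume x: "\<forall>n. x n \<in> \<sigma>' (map x [0..<n])"
    show "\<not> snd (E, Q) x"
    proof
      assume "snd (E, Q) x"
      moreover have "\<forall>n. x n \<in> \<Union>E" using x sig' by blast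
      ultimately obtain r where r: "strict_mono r" and P: "P (x \<circ> r)" using sub by auto
      have "(x \<circ> r) k \<in> \<sigma> (map (x \<circ> r) [0..<k])" for k
      proof -
        have "map (x \<circ> r) [0..<k] \<in> L (map x [0..<r k])"
          unfolding L_def using r seq_suble[OF r, of k] by (auto simp: strict_mono_less)
        then show ?thesis using x sig' by auto
      qed
      then show False using s2 P by blast
    qed
  qed
next
  assume "I_pre_wins (E, P)"
  then obtain Es where e1: "\<forall>n. Es n \<in> E" and e2: "\<forall>x. (\<forall>n. x n \<in> Es n) \<longrightarrow> \<not> P x"
    unfolding I_pre_wins_def by auto
  define Es' where "Es' = (\<lambda>n. SOME M. M \<in> E \<and> (\<forall>m\<le>n. M \<subseteq> Es m))"
  have e': "Es' n \<in> E \<and> (\<forall>m\<le>n. Es' n \<subseteq> Es m)" for n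
  proof -
    have fin: "finite (Es ` {..n})" by simp
    obtain M where "M \<in> E" "\<forall>s\<in>Es ` {..n}. M \<subseteq> s" using dir[OF fin] e1 by blast
    then have "\<exists>M. M \<in> E \<and> (\<forall>m\<le>n. M \<subseteq> Es m)" by blast
    from someI_ex[OF this] show ?thesis unfolding Es'_def .
  qed
  show "I_pre_wins (E, Q)" unfolding I_pre_wins_def
  proof (rule exI[of _ Es'], intro conjI allI impI)
    fix n show "Es' n \<in> fst (E, Q)" using e' by simp
  next
    fix x assume x: "\<forall>n. x n \<in> Es' n"
    show "\<not> snd (E, Q) x"
    proof
      assume "snd (E, Q) x"
      moreover have "\<forall>n. x n \<in> \<Union>E" using x e' by blast
      ultimately obtain r where r: "strict_mono r" and P: "P (x \<circ> r)" using sub by auto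
      have "(x \<circ> r) k \<in> Es k" for k
        using x e' seq_suble[OF r, of k] by auto
      then show False using e2 P by blast
    qed
  qed
qed


definition cf :: "'a topology \<Rightarrow> ('a \<Rightarrow> real) \<Rightarrow> 'a \<Rightarrow> real" where
  "cf X f = (\<lambda>x. if x \<in> topspace X then f x else 0)"

definition CT :: "'a topology \<Rightarrow> ('a set \<Rightarrow> bool) \<Rightarrow> ('a \<Rightarrow> real) topology" where
  "CT X P = topology_generated_by {basic_nbhd X f A \<epsilon> | f A \<epsilon>. f \<in> Cfun X \<and> P A \<and> \<epsilon> > 0}"

lemma Cp_CT: "Cp X = CT X (\<lambda>A. finite A \<and> A \<subseteq> topspace X)"
  unfolding Cp_def CT_def by (simp add: conj_assoc)

lemma Ck_CT: "Ck X = CT X (compactin X)"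
  unfolding Ck_def CT_def by simp

lemma Cfun_cf: "continuous_map X euclideanreal f \<Longrightarrow> cf X f \<in> Cfun X"
  unfolding Cfun_def cf_def
  by (auto elim!: continuous_map_eq)

lemma cf_eq: "x \<in> topspace X \<Longrightarrow> cf X f x = f x"
  by (simp add: cf_def)

lemma Cfun_cont: "f \<in> Cfun X \<Longrightarrow> continuous_map X euclideanreal f"
  by (simp add: Cfun_def)

lemma Cfun_out: "f \<in> Cfun X \<Longrightarrow> x \<notin> topspace X \<Longrightarrow> f x = 0"
  by (simp add: Cfun_def)

lemma zero_Cfun: "zero_fun \<in> Cfun X"
  by (simp add: Cfun_def zero_fun_def)

lemma basic_nbhd_mono: "A \<subseteq> A' \<Longrightarrow> d' \<le> d \<Longrightarrow> basic_nbhd X f A' d' \<subseteq> basic_nbhd X f A d"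
  unfolding basic_nbhd_def by fastforce

lemma basic_nbhd_sub: "basic_nbhd X f A d \<subseteq> Cfun X"
  unfolding basic_nbhd_def by auto

lemma sup_lemma:
  assumes "compactin X A" "continuous_map X euclideanreal h" "\<forall>x\<in>A. h x < e"
  shows "\<exists>d>0. \<forall>x\<in>A. h x \<le> e - d"
proof (cases "A = {}")
  case True then show ?thesis by (intro exI[of _ 1]) auto
next
  case False
  have "compactin euclideanreal (h ` A)" using image_compactin assms by blast
  then have "compact (h ` A)" by simp
  then obtain m where m: "m \<in> h ` A" "\<forall>t\<in>h ` A. t \<le> m"
    using compact_attains_sup[of "h ` A"] False by blast
  have "m < e" using m(1) assms(3) by auto
  then show ?thesis using m(2) by (intro exI[of _ "e - m"]) auto
qed

lemma CT_topspace:
  assumes "P {}"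
  shows "topspace (CT X P) = Cfun X"
proof -
  have "basic_nbhd X zero_fun {} 1 = Cfun X" unfolding basic_nbhd_def by auto
  then have "Cfun X \<in> {basic_nbhd X f A \<epsilon> | f A \<epsilon>. f \<in> Cfun X \<and> P A \<and> \<epsilon> > 0}"
    using assms zero_Cfun by fastforce
  moreover have "\<forall>S \<in> {basic_nbhd X f A \<epsilon> | f A \<epsilon>. f \<in> Cfun X \<and> P A \<and> \<epsilon> > 0}. S \<subseteq> Cfun X"
    using basic_nbhd_sub by blast
  ultimately show ?thesis unfolding CT_def by (simp only: topology_generated_by_topspace) blast
qed

lemma CT_basic_open:
  "f \<in> Cfun X \<Longrightarrow> P A \<Longrightarrow> e > 0 \<Longrightarrow> openin (CT X P) (basic_nbhd X f A e)"
  unfolding CT_def by (rule topology_generated_by_Basis) blast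

lemma CT_local:
  assumes PUn: "\<And>A B. P A \<Longrightarrow> P B \<Longrightarrow> P (A \<union> B)" and Pc: "\<And>A. P A \<Longrightarrow> compactin X A"
    and P0: "P {}"
  assumes W: "openin (CT X P) W"
  shows "\<forall>g\<in>W. \<exists>A d. P A \<and> d > 0 \<and> basic_nbhd X g A d \<subseteq> W"
proof -
  have "generate_topology_on {basic_nbhd X f A \<epsilon> | f A \<epsilon>. f \<in> Cfun X \<and> P A \<and> \<epsilon> > 0} W"
    using W unfolding CT_def by (rule openin_topology_generated_by)
  then show ?thesis
  proof (induction rule: generate_topology_on.induct)
    case Empty then show ?case by simp
  next
    case (Int a b)
    show ?case
    proof
      fix g assume "g \<in> a \<inter> b"
      then obtain A1 d1 A2 d2 where 1: "P A1" "d1 > 0" "basic_nbhd X g A1 d1 \<subseteq> a"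
        and 2: "P A2" "d2 > 0" "basic_nbhd X g A2 d2 \<subseteq> b" using Int.IH by blast
      have "basic_nbhd X g (A1 \<union> A2) (min d1 d2) \<subseteq> basic_nbhd X g A1 d1"
        "basic_nbhd X g (A1 \<union> A2) (min d1 d2) \<subseteq> basic_nbhd X g A2 d2"
        by (rule basic_nbhd_mono; simp)+
      then show "\<exists>A d. P A \<and> d > 0 \<and> basic_nbhd X g A d \<subseteq> a \<inter> b"
        using 1 2 PUn by (intro exI[of _ "A1 \<union> A2"] exI[of _ "min d1 d2"]) auto
    qed
  next
    case (UN K)
    show ?case
    proof
      fix g assume "g \<in> \<Union>K"
      then obtain k where "k \<in> K" "g \<in> k" by blast
      then obtain A d where "P A" "d > 0" "basic_nbhd X g A d \<subseteq> k" using UN.IH by blast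
      then show "\<exists>A d. P A \<and> d > 0 \<and> basic_nbhd X g A d \<subseteq> \<Union>K" using \<open>k \<in> K\<close> by blast
    qed
  next
    case (Basis s)
    then obtain f A e where s: "s = basic_nbhd X f A e" "f \<in> Cfun X" "P A" "e > 0" by blast
    show ?case
    proof
      fix g assume g: "g \<in> s"
      then have gC: "g \<in> Cfun X" and ga: "\<forall>x\<in>A. \<bar>f x - g x\<bar> < e" using s unfolding basic_nbhd_def by auto
      have cont: "continuous_map X euclideanreal (\<lambda>x. \<bar>f x - g x\<bar>)"
        using Cfun_cont[OF s(2)] Cfun_cont[OF gC] by (intro continuous_intros) auto
      obtain d where d: "d > 0" "\<forall>x\<in>A. \<bar>f x - g x\<bar> \<le> e - d"
        using sup_lemma[OF Pc[OF s(3)] cont ga] by blast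
      have "basic_nbhd X g A d \<subseteq> s"
      proof
        fix h assume "h \<in> basic_nbhd X g A d"
        then have "h \<in> Cfun X" "\<forall>x\<in>A. \<bar>g x - h x\<bar> < d" unfolding basic_nbhd_def by auto
        then show "h \<in> s" using d(2) unfolding s(1) basic_nbhd_def
          by (auto simp: abs_diff_le_iff abs_diff_less_iff) (smt (verit, best))+
      qed
      then show "\<exists>A d. P A \<and> d > 0 \<and> basic_nbhd X g A d \<subseteq> s" using d(1) s(3) by blast
    qed
  qed
qed

lemma Pk: "compactin X {}" "compactin X A \<Longrightarrow> compactin X B \<Longrightarrow> compactin X (A \<union> B)"
  by (auto intro: compactin_Un)

lemma Ck_topspace: "topspace (Ck X) = Cfun X"
  unfolding Ck_CT by (rule CT_topspace) simp

lemma Cp_topspace: "topspace (Cp X) = Cfun X"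
  unfolding Cp_CT by (rule CT_topspace) simp

lemma Ck_basic_open: "f \<in> Cfun X \<Longrightarrow> compactin X A \<Longrightarrow> e > 0 \<Longrightarrow> openin (Ck X) (basic_nbhd X f A e)"
  unfolding Ck_CT by (rule CT_basic_open)

lemma Cp_basic_open: "f \<in> Cfun X \<Longrightarrow> finite A \<Longrightarrow> A \<subseteq> topspace X \<Longrightarrow> e > 0 \<Longrightarrow> openin (Cp X) (basic_nbhd X f A e)"
  unfolding Cp_CT by (rule CT_basic_open) auto

lemma Ck_local: "openin (Ck X) W \<Longrightarrow> g \<in> W \<Longrightarrow> \<exists>A d. compactin X A \<and> d > 0 \<and> basic_nbhd X g A d \<subseteq> W"
  unfolding Ck_CT using CT_local[of "compactin X" X W] by (auto intro: compactin_Un)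

lemma Cp_local: "openin (Cp X) W \<Longrightarrow> g \<in> W \<Longrightarrow> \<exists>A d. finite A \<and> A \<subseteq> topspace X \<and> d > 0 \<and> basic_nbhd X g A d \<subseteq> W"
  unfolding Cp_CT using CT_local[of "\<lambda>A. finite A \<and> A \<subseteq> topspace X" X W]
  by (auto intro: finite_imp_compactin)

lemma Cp_closure_zero:
  assumes "S \<subseteq> Cfun X"
  shows "zero_fun \<in> Cp X closure_of S \<longleftrightarrow>
     (\<forall>F d. finite F \<longrightarrow> F \<subseteq> topspace X \<longrightarrow> d > 0 \<longrightarrow> (\<exists>s\<in>S. \<forall>x\<in>F. \<bar>s x\<bar> < d))"
proof
  assume z: "zero_fun \<in> Cp X closure_of S"
  show "\<forall>F d. finite F \<longrightarrow> F \<subseteq> topspace X \<longrightarrow> d > 0 \<longrightarrow> (\<exists>s\<in>S. \<forall>x\<in>F. \<bar>s x\<bar> < d)"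
  proof (intro allI impI)
    fix F d assume F: "finite F" "F \<subseteq> topspace X" "(d::real) > 0"
    have "openin (Cp X) (basic_nbhd X zero_fun F d)" using Cp_basic_open[OF zero_Cfun F] .
    moreover have "zero_fun \<in> basic_nbhd X zero_fun F d" using F zero_Cfun unfolding basic_nbhd_def by auto
    ultimately obtain s where "s \<in> S" "s \<in> basic_nbhd X zero_fun F d" using z unfolding in_closure_of by blast
    then show "\<exists>s\<in>S. \<forall>x\<in>F. \<bar>s x\<bar> < d" unfolding basic_nbhd_def zero_fun_def by auto
  qed
next
  assume R: "\<forall>F d. finite F \<longrightarrow> F \<subseteq> topspace X \<longrightarrow> d > 0 \<longrightarrow> (\<exists>s\<in>S. \<forall>x\<in>F. \<bar>s x\<bar> < d)"
  show "zero_fun \<in> Cp X closure_of S" unfolding in_closure_of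
  proof (intro conjI allI impI)
    show "zero_fun \<in> topspace (Cp X)" by (simp add: Cp_topspace zero_Cfun)
  next
    fix T assume T: "zero_fun \<in> T \<and> openin (Cp X) T"
    obtain F d where F: "finite F" "F \<subseteq> topspace X" "d > 0" "basic_nbhd X zero_fun F d \<subseteq> T"
      using Cp_local[of X T zero_fun] T by blast
    obtain s where "s \<in> S" "\<forall>x\<in>F. \<bar>s x\<bar> < d" using R F(1,2,3) by meson
    then have "s \<in> basic_nbhd X zero_fun F d" using assms unfolding basic_nbhd_def zero_fun_def by auto
    then show "\<exists>y. y \<in> S \<and> y \<in> T" using F(4) \<open>s \<in> S\<close> by blast
  qed
qed

lemma Cp_t1: "t1_space (Cp X)"
  unfolding t1_space_def Cp_topspace
proof (intro ballI impI)
  fix f g assume f: "f \<in> Cfun X" and g: "g \<in> Cfun X" and ne: "f \<noteq> g"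
  then obtain x where x: "f x \<noteq> g x" by blast
  then have xt: "x \<in> topspace X" using Cfun_out[OF f] Cfun_out[OF g] by metis
  show "\<exists>U. openin (Cp X) U \<and> f \<in> U \<and> g \<notin> U"
    using x xt f by (intro exI[of _ "basic_nbhd X f {x} \<bar>f x - g x\<bar>"] conjI Cp_basic_open)
      (auto simp: basic_nbhd_def)
qed

lemma lf_closed_discrete:
  assumes t1: "t1_space Y" and S: "S \<subseteq> topspace Y"
    and lf: "\<And>y. y \<in> topspace Y \<Longrightarrow> \<exists>V. openin Y V \<and> y \<in> V \<and> finite (V \<inter> S)"
  shows "S \<in> closed_discrete_sets Y"
proof -
  have key: "\<exists>V. openin Y V \<and> y \<in> V \<and> V \<inter> S \<subseteq> {y}" if y: "y \<in> topspace Y" for y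
  proof -
    obtain V where V: "openin Y V" "y \<in> V" "finite (V \<inter> S)" using lf[OF y] by blast
    have "closedin Y (V \<inter> S - {y})"
      using t1 V(3) S unfolding t1_space_closedin_finite by auto
    then have "openin Y (V - (V \<inter> S - {y}))" using V(1) by (simp add: openin_diff)
    then show ?thesis using V(2) by (intro exI[of _ "V - (V \<inter> S - {y})"]) auto
  qed
  have "openin Y (topspace Y - S)"
  proof (subst openin_subopen, intro ballI)
    fix y assume "y \<in> topspace Y - S"
    then obtain V where "openin Y V" "y \<in> V" "V \<inter> S \<subseteq> {y}" using key by blast
    then show "\<exists>T. openin Y T \<and> y \<in> T \<and> T \<subseteq> topspace Y - S"
      using \<open>y \<in> topspace Y - S\<close> openin_subset[of Y V]
      by (intro exI[of _ V]) auto
  qed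
  then have "closedin Y S" using S closedin_def by blast
  moreover have "\<forall>s\<in>S. \<exists>U. openin Y U \<and> U \<inter> S = {s}"
  proof
    fix s assume "s \<in> S"
    then obtain V where "openin Y V" "s \<in> V" "V \<inter> S \<subseteq> {s}" using key S by blast
    then show "\<exists>U. openin Y U \<and> U \<inter> S = {s}" using \<open>s \<in> S\<close> by (intro exI[of _ V]) auto
  qed
  ultimately show ?thesis unfolding closed_discrete_sets_def using S by blast
qed


lemma Tych_t1: "Tychonoff_space X \<Longrightarrow> t1_space X"
  unfolding Tychonoff_space_def using Hausdorff_imp_t1_space by blast

lemma open_minus_pt: "Tychonoff_space X \<Longrightarrow> openin X (topspace X - {x})"
proof -
  assume "Tychonoff_space X"
  then have t1: "t1_space X" by (rule Tych_t1)
  show ?thesis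
  proof (cases "x \<in> topspace X")
    case True
    then have "closedin X {x}" using t1 by (simp add: t1_space_closedin_singleton)
    then show ?thesis by (simp add: openin_diff)
  next
    case False then show ?thesis by simp
  qed
qed

lemma urysohn_cpt:
  assumes "Tychonoff_space X" "compactin X K" "openin X U" "K \<subseteq> U"
  shows "\<exists>\<phi>. continuous_map X euclideanreal \<phi> \<and> (\<forall>x\<in>K. \<phi> x = 0) \<and>
             (\<forall>x\<in>topspace X - U. \<phi> x = 1) \<and> (\<forall>x\<in>topspace X. 0 \<le> \<phi> x \<and> \<phi> x \<le> 1)"
proof -
  have cr: "completely_regular_space X" using assms(1) unfolding Tychonoff_space_def by blast
  have cl: "closedin X (topspace X - U)" using assms(3) by (simp add: closedin_diff)
  have dj: "disjnt (topspace X - U) K" using assms(4) by (auto simp: disjnt_def)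
  obtain f where f: "continuous_map X (subtopology euclidean {0..1::real}) f" "f ` K \<subseteq> {0}" "f ` (topspace X - U) \<subseteq> {1}"
    using Urysohn_completely_regular_closed_compact[of 0 1 X "topspace X - U" K] cr cl dj assms(2) by auto
  have "continuous_map X euclideanreal f" using f(1) continuous_map_into_fulltopology by blast
  moreover have "\<forall>x\<in>topspace X. 0 \<le> f x \<and> f x \<le> 1"
    using f(1) unfolding continuous_map_in_subtopology by auto
  ultimately show ?thesis using f(2,3) by (intro exI[of _ f]) auto
qed

definition KN :: "'a topology \<Rightarrow> 'a set set \<Rightarrow> 'a set" where
  "KN X N = (SOME K. K \<in> cpt_sets X \<and> N = nbhds_of_set X K)"

lemma KN: "N \<in> nbhds_cpt X \<Longrightarrow> KN X N \<in> cpt_sets X \<and> N = nbhds_of_set X (KN X N)"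
  unfolding KN_def nbhds_cpt_def by (rule someI_ex) blast

lemma cpt_setsD: "K \<in> cpt_sets X \<Longrightarrow> compactin X K \<and> K \<noteq> {}"
  by (simp add: cpt_sets_def)

lemma nbhds_ofD: "U \<in> nbhds_of_set X K \<Longrightarrow> openin X U \<and> U \<noteq> topspace X \<and> K \<subseteq> U"
  by (simp add: nbhds_of_set_def)

lemma nbhds_cpt_memD: "N \<in> nbhds_cpt X \<Longrightarrow> U \<in> N \<Longrightarrow> openin X U \<and> U \<noteq> topspace X"
  unfolding nbhds_cpt_def nbhds_of_set_def by auto

lemma not_omega:
  assumes U: "\<forall>n. openin X (U n) \<and> U n \<noteq> topspace X" and no: "range U \<notin> omega_covers X"
  shows "\<exists>F. finite F \<and> F \<subseteq> topspace X \<and> (\<forall>n. \<not> F \<subseteq> U n)"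
proof (cases "\<Union>(range U) = topspace X")
  case True
  have "topspace X \<notin> range U" using U by auto
  have "\<not> (\<forall>F. finite F \<and> F \<subseteq> topspace X \<longrightarrow> (\<exists>V\<in>range U. F \<subseteq> V))"
  proof
    assume H: "\<forall>F. finite F \<and> F \<subseteq> topspace X \<longrightarrow> (\<exists>V\<in>range U. F \<subseteq> V)"
    have "range U \<in> omega_covers X" unfolding omega_covers_def open_covers_def mem_Collect_eq
    proof (intro conjI)
      show "\<forall>V\<in>range U. openin X V" using U by blast
      show "\<Union>(range U) = topspace X" by (rule True)
      show "topspace X \<notin> range U" by fact
      show "\<forall>F. finite F \<and> F \<subseteq> topspace X \<longrightarrow> (\<exists>V\<in>range U. F \<subseteq> V)" by (rule H)
    qed
    then show False using no by contradiction
  qed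
  then obtain F where F: "finite F" "F \<subseteq> topspace X" "\<not> (\<exists>V\<in>range U. F \<subseteq> V)" by meson
  then have "\<forall>n. \<not> F \<subseteq> U n" by simp
  then show ?thesis using F(1,2) by meson
next
  case False
  have "\<Union>(range U) \<subseteq> topspace X" using U openin_subset by blast
  then obtain p where "p \<in> topspace X" "p \<notin> \<Union>(range U)" using False by blast
  then show ?thesis by (intro exI[of _ "{p}"]) auto
qed

lemma omega_inf:
  fixes U :: "nat \<Rightarrow> 'a set"
  assumes U: "\<forall>n. U n \<noteq> topspace X" and om: "range U \<in> omega_covers X"
    and F: "finite F" "F \<subseteq> topspace X"
  shows "\<exists>n\<ge>N. F \<subseteq> U n"
proof (rule ccontr)
  assume "\<not> ?thesis"
  then have nF: "\<forall>n\<ge>N. \<not> F \<subseteq> U n" by blast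
  have cov: "\<Union>(range U) = topspace X" using om unfolding omega_covers_def open_covers_def by auto
  have "\<forall>n. \<exists>p. p \<in> topspace X \<and> p \<notin> U n"
  proof
    fix n
    have "U n \<subseteq> topspace X" using cov by blast
    then show "\<exists>p. p \<in> topspace X \<and> p \<notin> U n" using U by blast
  qed
  then obtain p where p: "\<forall>n. p n \<in> topspace X \<and> p n \<notin> U n" by metis
  define F' where "F' = F \<union> p ` {..<N}"
  have "finite F'" "F' \<subseteq> topspace X" using F p unfolding F'_def by auto
  then obtain V where "V \<in> range U" "F' \<subseteq> V" using om unfolding omega_covers_def by blast
  then obtain m where m: "F' \<subseteq> U m" by blast
  show False
  proof (cases "m < N")
    case True
    then have "p m \<in> F'" unfolding F'_def by blast
    then show False using m p by blast
  next
    case False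
    then show False using nF m unfolding F'_def by auto
  qed
qed

lemma gamma_sub_omega: "gamma_covers X \<subseteq> omega_covers X"
proof
  fix \<U> assume g: "\<U> \<in> gamma_covers X"
  have "\<exists>U\<in>\<U>. F \<subseteq> U" if F: "finite F" "F \<subseteq> topspace X" for F
  proof -
    have "finite {U\<in>\<U>. \<not> F \<subseteq> U}" using g F unfolding gamma_covers_def by blast
    moreover have "infinite \<U>" using g unfolding gamma_covers_def by blast
    ultimately have "\<U> - {U\<in>\<U>. \<not> F \<subseteq> U} \<noteq> {}" by (metis Diff_eq_empty_iff finite_subset)
    then show ?thesis by blast
  qed
  then show "\<U> \<in> omega_covers X" using g unfolding gamma_covers_def omega_covers_def by blast
qed

lemma k_R1: "U \<in> k_covers X \<Longrightarrow> N \<in> nbhds_cpt X \<Longrightarrow> U \<inter> N \<noteq> {}"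
proof -
  assume U: "U \<in> k_covers X" and N: "N \<in> nbhds_cpt X"
  obtain K where K: "K \<in> cpt_sets X" "N = nbhds_of_set X K" using N unfolding nbhds_cpt_def by blast
  then obtain V where "V \<in> U" "K \<subseteq> V" using U unfolding k_covers_def cpt_sets_def by blast
  moreover have "openin X V" "V \<noteq> topspace X" using U \<open>V \<in> U\<close> unfolding k_covers_def open_covers_def by auto
  ultimately have "V \<in> U \<inter> N" using K(2) unfolding nbhds_of_set_def by blast
  then show ?thesis by blast
qed

lemma k_R2:
  assumes ne: "topspace X \<noteq> {}" and f: "\<forall>N\<in>nbhds_cpt X. f N \<in> N"
  shows "f ` nbhds_cpt X \<in> k_covers X"
proof -
  have opn: "\<forall>V\<in>f ` nbhds_cpt X. openin X V \<and> V \<noteq> topspace X" using f nbhds_cpt_memD by blast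
  have sub: "\<exists>V\<in>f ` nbhds_cpt X. K \<subseteq> V" if K: "compactin X K" "K \<noteq> {}" for K
  proof -
    have "K \<in> cpt_sets X" using K by (simp add: cpt_sets_def)
    then have N: "nbhds_of_set X K \<in> nbhds_cpt X" unfolding nbhds_cpt_def by (rule imageI)
    then have "f (nbhds_of_set X K) \<in> nbhds_of_set X K" using f by blast
    then have "K \<subseteq> f (nbhds_of_set X K)" using nbhds_ofD by blast
    then show ?thesis using N by (intro bexI[of _ "f (nbhds_of_set X K)"]) auto
  qed
  obtain p where p: "p \<in> topspace X" using ne by blast
  have sub2: "\<exists>V\<in>f ` nbhds_cpt X. K \<subseteq> V" if K: "compactin X K" for K
  proof (cases "K = {}")
    case True
    then show ?thesis using sub[of "{p}"] p by auto
  next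
    case False then show ?thesis using sub K by blast
  qed
  have "\<Union>(f ` nbhds_cpt X) = topspace X"
  proof
    show "\<Union>(f ` nbhds_cpt X) \<subseteq> topspace X" using opn openin_subset by blast
    show "topspace X \<subseteq> \<Union>(f ` nbhds_cpt X)"
    proof
      fix x assume "x \<in> topspace X"
      then obtain V where "V \<in> f ` nbhds_cpt X" "{x} \<subseteq> V" using sub2[of "{x}"] by auto
      then show "x \<in> \<Union>(f ` nbhds_cpt X)" by blast
    qed
  qed
  then show ?thesis using opn sub2 unfolding k_covers_def open_covers_def by auto
qed

lemma dir_cpt:
  assumes "finite S" "S \<subseteq> nbhds_cpt X" "S \<noteq> {}"
  shows "\<exists>M\<in>nbhds_cpt X. \<forall>s\<in>S. M \<subseteq> s"
proof -
  define K where "K = \<Union>(KN X ` S)"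
  have kk: "\<And>s. s \<in> S \<Longrightarrow> compactin X (KN X s) \<and> KN X s \<noteq> {}"
    using assms(2) KN cpt_setsD by blast
  have "compactin X K" unfolding K_def using assms kk
    by (intro compactin_Union) auto
  moreover have "K \<noteq> {}" unfolding K_def using assms kk by auto
  ultimately have M: "nbhds_of_set X K \<in> nbhds_cpt X" unfolding nbhds_cpt_def cpt_sets_def by blast
  have "\<forall>s\<in>S. nbhds_of_set X K \<subseteq> s"
  proof
    fix s assume s: "s \<in> S"
    then have "s = nbhds_of_set X (KN X s)" using KN assms by blast
    moreover have "KN X s \<subseteq> K" unfolding K_def using s by blast
    ultimately show "nbhds_of_set X K \<subseteq> s" unfolding nbhds_of_set_def by auto
  qed
  then show ?thesis using M by blast
qed

lemma sub_gamma:
  fixes x :: "nat \<Rightarrow> 'a set"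
  assumes x: "\<forall>n. x n \<in> \<Union>(nbhds_cpt X)" and ng: "range x \<notin> gamma_covers X"
  shows "\<exists>r::nat \<Rightarrow> nat. strict_mono r \<and> range (x \<circ> r) \<notin> omega_covers X"
proof -
  have xo: "\<forall>n. openin X (x n) \<and> x n \<noteq> topspace X" using x nbhds_cpt_memD by blast
  show ?thesis
  proof (cases "\<Union>(range x) = topspace X")
    case False
    then have "range (x \<circ> id) \<notin> omega_covers X" unfolding omega_covers_def open_covers_def by auto
    moreover have "strict_mono (id::nat \<Rightarrow> nat)" by (simp add: strict_mono_def)
    ultimately show ?thesis by (intro exI[of _ "id::nat \<Rightarrow> nat"]) simp
  next
    case cov: True
    show ?thesis
    proof (cases "finite (range x)")
      case True
      then obtain U where "U \<in> range x" "infinite (x -` {U})"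
        using inf_img_fin_domE[of x UNIV] by auto
      then obtain r :: "nat \<Rightarrow> nat" where r: "strict_mono r" "\<forall>n. r n \<in> x -` {U}" using infinite_enumerate by blast
      then have xr: "\<forall>n. x (r n) = U" by simp
      have "range (x \<circ> r) \<subseteq> {U}" using xr by auto
      moreover have "U \<in> range (x \<circ> r)" using xr[rule_format, of 0] by (metis comp_apply rangeI)
      ultimately have "range (x \<circ> r) = {U}" by blast
      moreover have "U \<noteq> topspace X"
      proof -
        obtain n where "U = x n" using \<open>U \<in> range x\<close> by blast
        then show ?thesis using xo by simp
      qed
      ultimately have "range (x \<circ> r) \<notin> omega_covers X"
      proof -
        assume a: "range (x \<circ> r) = {U}" "U \<noteq> topspace X"
        show ?thesis
        proof
          assume "range (x \<circ> r) \<in> omega_covers X"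
          then have "\<Union>(range (x \<circ> r)) = topspace X" by (simp add: omega_covers_def open_covers_def)
          then show False using a by simp
        qed
      qed
      then show ?thesis using r by blast
    next
      case inf: False
      have "topspace X \<notin> range x" using xo by (metis rangeE)
      have "\<not> (\<forall>F. finite F \<and> F \<subseteq> topspace X \<longrightarrow> finite {U\<in>range x. \<not> F \<subseteq> U})"
      proof
        assume H: "\<forall>F. finite F \<and> F \<subseteq> topspace X \<longrightarrow> finite {U\<in>range x. \<not> F \<subseteq> U}"
        have "range x \<in> gamma_covers X" unfolding gamma_covers_def open_covers_def mem_Collect_eq
        proof (intro conjI)
          show "\<forall>V\<in>range x. openin X V" using xo by blast
          show "\<Union>(range x) = topspace X" by (rule cov)
          show "topspace X \<notin> range x" by fact
          show "infinite (range x)" by (rule inf)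
          show "\<forall>F. finite F \<and> F \<subseteq> topspace X \<longrightarrow> finite {U\<in>range x. \<not> F \<subseteq> U}" by (rule H)
        qed
        then show False using ng by contradiction
      qed
      then obtain F where F: "finite F" "F \<subseteq> topspace X" "infinite {U\<in>range x. \<not> F \<subseteq> U}" by meson
      have "{U\<in>range x. \<not> F \<subseteq> U} \<subseteq> x ` {n. \<not> F \<subseteq> x n}" by auto
      then have "infinite {n. \<not> F \<subseteq> x n}" using F(3) finite_surj by blast
      then obtain r :: "nat \<Rightarrow> nat" where r: "strict_mono r" "\<forall>n. r n \<in> {n. \<not> F \<subseteq> x n}" using infinite_enumerate by blast
      then have "\<not> (\<exists>V\<in>range (x \<circ> r). F \<subseteq> V)" by auto
      then have "range (x \<circ> r) \<notin> omega_covers X" using F unfolding omega_covers_def by blast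
      then show ?thesis using r by blast
    qed
  qed
qed


lemma Ck_local_cpt:
  assumes ne: "topspace X \<noteq> {}" and W: "openin (Ck X) W" "g \<in> W"
  shows "\<exists>K d. K \<in> cpt_sets X \<and> d > 0 \<and> basic_nbhd X g K d \<subseteq> W"
proof -
  obtain A d where A: "compactin X A" "d > 0" "basic_nbhd X g A d \<subseteq> W" using Ck_local[OF W] by blast
  obtain p where p: "p \<in> topspace X" using ne by blast
  have "compactin X (A \<union> {p})" using A(1) p using compactin_Un[of X A "{p}"] by simp
  then have "A \<union> {p} \<in> cpt_sets X" by (simp add: cpt_sets_def)
  moreover have "basic_nbhd X g (A \<union> {p}) d \<subseteq> basic_nbhd X g A d" by (rule basic_nbhd_mono) auto
  ultimately show ?thesis using A by blast
qed

definition KD :: "'a topology \<Rightarrow> ('a \<Rightarrow> real) \<Rightarrow> ('a \<Rightarrow> real) set \<Rightarrow> 'a set \<times> real" where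
  "KD X g W = (SOME Kd. fst Kd \<in> cpt_sets X \<and> snd Kd > 0 \<and> basic_nbhd X g (fst Kd) (snd Kd) \<subseteq> W)"

lemma KD:
  assumes "topspace X \<noteq> {}" "openin (Ck X) W" "g \<in> W"
  shows "fst (KD X g W) \<in> cpt_sets X \<and> snd (KD X g W) > 0 \<and> basic_nbhd X g (fst (KD X g W)) (snd (KD X g W)) \<subseteq> W"
proof -
  obtain K d where "K \<in> cpt_sets X \<and> d > 0 \<and> basic_nbhd X g K d \<subseteq> W" using Ck_local_cpt[OF assms] by blast
  then have "\<exists>Kd. fst Kd \<in> cpt_sets X \<and> snd Kd > 0 \<and> basic_nbhd X g (fst Kd) (snd Kd) \<subseteq> W"
    by (intro exI[of _ "(K, d)"]) simp
  from someI_ex[OF this] show ?thesis unfolding KD_def .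
qed

definition ury :: "'a topology \<Rightarrow> 'a set \<Rightarrow> 'a set \<Rightarrow> 'a \<Rightarrow> real" where
  "ury X K U = (SOME \<phi>. continuous_map X euclideanreal \<phi> \<and> (\<forall>x\<in>K. \<phi> x = 0) \<and>
             (\<forall>x\<in>topspace X - U. \<phi> x = 1) \<and> (\<forall>x\<in>topspace X. 0 \<le> \<phi> x \<and> \<phi> x \<le> 1))"

lemma ury:
  assumes "Tychonoff_space X" "compactin X K" "openin X U" "K \<subseteq> U"
  shows "continuous_map X euclideanreal (ury X K U) \<and> (\<forall>x\<in>K. ury X K U x = 0) \<and>
             (\<forall>x\<in>topspace X - U. ury X K U x = 1) \<and> (\<forall>x\<in>topspace X. 0 \<le> ury X K U x \<and> ury X K U x \<le> 1)"
proof -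
  note e = urysohn_cpt[OF assms]
  show ?thesis unfolding ury_def by (rule someI_ex[OF e])
qed

lemma zero_closure_crit:
  assumes x: "\<forall>n. x n \<in> Cfun X"
    and crit: "\<And>F N. finite F \<Longrightarrow> F \<subseteq> topspace X \<Longrightarrow> \<exists>n\<ge>N. \<forall>y\<in>F. \<bar>x n y\<bar> < 1 / (real n + 1)"
  shows "zero_fun \<in> Cp X closure_of range x"
proof -
  have "range x \<subseteq> Cfun X" using x by auto
  moreover have "\<exists>s\<in>range x. \<forall>y\<in>F. \<bar>s y\<bar> < d" if F: "finite F" "F \<subseteq> topspace X" "d > 0" for F d
  proof -
    obtain N :: nat where N: "inverse (real (Suc N)) < d" using reals_Archimedean F(3) by blast
    obtain n where n: "n \<ge> N" "\<forall>y\<in>F. \<bar>x n y\<bar> < 1 / (real n + 1)" using crit[OF F(1,2)] by blast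
    have "1 / (real n + 1) \<le> inverse (real (Suc N))" using n(1)
      by (simp add: divide_simps)
    then have "\<forall>y\<in>F. \<bar>x n y\<bar> < d" using n(2) N by force
    then show ?thesis by blast
  qed
  ultimately show ?thesis using Cp_closure_zero by blast
qed

lemma nbhds_pt_iff: "W \<in> nbhds_pt Y y \<longleftrightarrow> openin Y W \<and> y \<in> W"
  by (simp add: nbhds_pt_def)

lemma T1:
  assumes T: "Tychonoff_space X" and ne: "topspace X \<noteq> {}"
  shows "game_le_II (G1_neg (nbhds_cpt X) (omega_covers X))
           (G1_neg (nbhds_pt (Ck X) zero_fun) (clustering_sets (Cp X) zero_fun))"
proof (rule translation[where Ir = "\<lambda>n W. nbhds_of_set X (fst (KD X zero_fun W))"
      and IIr = "\<lambda>n U W. cf X (ury X (fst (KD X zero_fun W)) U)"])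
  fix n and a :: "('a \<Rightarrow> real) set"
  assume "a \<in> fst (G1_neg (nbhds_pt (Ck X) zero_fun) (clustering_sets (Cp X) zero_fun))"
  then have a: "openin (Ck X) a" "zero_fun \<in> a" by (simp_all add: nbhds_pt_iff)
  then have "fst (KD X zero_fun a) \<in> cpt_sets X" using KD[OF ne] by blast
  then show "nbhds_of_set X (fst (KD X zero_fun a)) \<in> fst (G1_neg (nbhds_cpt X) (omega_covers X))"
    by (simp add: nbhds_cpt_def)
next
  fix n and a :: "('a \<Rightarrow> real) set" and b
  assume "a \<in> fst (G1_neg (nbhds_pt (Ck X) zero_fun) (clustering_sets (Cp X) zero_fun))"
  then have a: "openin (Ck X) a" "zero_fun \<in> a" by (simp_all add: nbhds_pt_iff)
  define K where "K = fst (KD X zero_fun a)"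
  define d where "d = snd (KD X zero_fun a)"
  have Kd: "K \<in> cpt_sets X" "d > 0" "basic_nbhd X zero_fun K d \<subseteq> a"
    using KD[OF ne a(1,2)] unfolding K_def d_def by auto
  assume "b \<in> nbhds_of_set X (fst (KD X zero_fun a))"
  then have b: "openin X b" "K \<subseteq> b" unfolding K_def nbhds_of_set_def by auto
  have cK: "compactin X K" using Kd(1) cpt_setsD by blast
  note u = ury[OF T cK b]
  have "cf X (ury X K b) \<in> Cfun X" using u Cfun_cf by blast
  moreover have "\<forall>x\<in>K. \<bar>zero_fun x - cf X (ury X K b) x\<bar> < d"
  proof
    fix x assume x: "x \<in> K"
    then have "x \<in> topspace X" using compactin_subset_topspace[OF cK] by blast
    then have "cf X (ury X K b) x = 0" using u x by (simp add: cf_eq)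
    then show "\<bar>zero_fun x - cf X (ury X K b) x\<bar> < d" using Kd(2) by (simp add: zero_fun_def)
  qed
  ultimately have "cf X (ury X K b) \<in> basic_nbhd X zero_fun K d" unfolding basic_nbhd_def by blast
  then show "cf X (ury X (fst (KD X zero_fun a)) b) \<in> a" using Kd(3) unfolding K_def by blast
next
  fix a :: "nat \<Rightarrow> ('a \<Rightarrow> real) set" and b :: "nat \<Rightarrow> 'a set"
  assume a: "\<forall>n. a n \<in> fst (G1_neg (nbhds_pt (Ck X) zero_fun) (clustering_sets (Cp X) zero_fun))"
    and b: "\<forall>n. b n \<in> nbhds_of_set X (fst (KD X zero_fun (a n)))"
    and sG: "snd (G1_neg (nbhds_cpt X) (omega_covers X)) b"
  define K where "K = (\<lambda>n. fst (KD X zero_fun (a n)))"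
  have aa: "\<forall>n. openin (Ck X) (a n) \<and> zero_fun \<in> a n" using a by (simp add: nbhds_pt_iff)
  have cK: "\<forall>n. compactin X (K n)"
  proof
    fix n
    have "K n \<in> cpt_sets X" unfolding K_def using KD[OF ne] aa by blast
    then show "compactin X (K n)" by (simp add: cpt_sets_def)
  qed
  have bb: "\<forall>n. openin X (b n) \<and> b n \<noteq> topspace X \<and> K n \<subseteq> b n"
    using b unfolding K_def nbhds_of_set_def by auto
  have nb: "range b \<notin> omega_covers X" using sG by simp
  have bo: "\<forall>n. openin X (b n) \<and> b n \<noteq> topspace X" using bb by blast
  obtain F where F: "finite F" "F \<subseteq> topspace X" "\<forall>n. \<not> F \<subseteq> b n"
    using not_omega[OF bo nb] by meson
  define c where "c = (\<lambda>n. cf X (ury X (K n) (b n)))"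
  have un: "continuous_map X euclideanreal (ury X (K n) (b n)) \<and> (\<forall>x\<in>K n. ury X (K n) (b n) x = 0) \<and>
             (\<forall>x\<in>topspace X - b n. ury X (K n) (b n) x = 1)" for n
    using ury[OF T cK[rule_format, of n]] bb by simp
  have cC: "\<forall>n. c n \<in> Cfun X" unfolding c_def using un Cfun_cf by blast
  have big: "\<exists>y\<in>F. \<bar>c n y\<bar> \<ge> 1" for n
  proof -
    obtain y where y: "y \<in> F" "y \<notin> b n" using F(3) by blast
    then have "y \<in> topspace X - b n" using F(2) by blast
    then have "c n y = 1" unfolding c_def using un[of n] by (simp add: cf_eq)
    then show ?thesis using y(1) by (intro bexI[of _ y]) simp_all
  qed
  have "zero_fun \<notin> Cp X closure_of range c"
  proof
    assume z: "zero_fun \<in> Cp X closure_of range c"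
    have rc: "range c \<subseteq> Cfun X" using cC by auto
    have "\<forall>F d. finite F \<longrightarrow> F \<subseteq> topspace X \<longrightarrow> d > 0 \<longrightarrow> (\<exists>s\<in>range c. \<forall>x\<in>F. \<bar>s x\<bar> < d)"
      using Cp_closure_zero[OF rc] z by blast
    then have "\<exists>s\<in>range c. \<forall>y\<in>F. \<bar>s y\<bar> < 1" using F(1,2) by simp
    then obtain n where n: "\<forall>y\<in>F. \<bar>c n y\<bar> < 1" by blast
    obtain y where "y \<in> F" "1 \<le> \<bar>c n y\<bar>" using big[of n] by blast
    then show False using n by fastforce
  qed
  then show "snd (G1_neg (nbhds_pt (Ck X) zero_fun) (clustering_sets (Cp X) zero_fun))
               (\<lambda>n. cf X (ury X (fst (KD X zero_fun (a n))) (b n)))"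
    unfolding clustering_sets_def c_def K_def by simp
qed


definition gW :: "('a \<Rightarrow> real) set \<Rightarrow> 'a \<Rightarrow> real" where
  "gW W = (SOME g. g \<in> W)"

definition shf :: "'a topology \<Rightarrow> nat \<Rightarrow> 'a set \<Rightarrow> ('a \<Rightarrow> real) set \<Rightarrow> 'a \<Rightarrow> real" where
  "shf X n U W = cf X (\<lambda>x. gW W x + ury X (fst (KD X (gW W) W)) U x * (real n + 1 + \<bar>gW W x\<bar>))"

lemma nonempty_opens_iff: "W \<in> nonempty_opens Y \<longleftrightarrow> openin Y W \<and> W \<noteq> {}"
  by (simp add: nonempty_opens_def)

lemma shf_props:
  assumes T: "Tychonoff_space X" and ne: "topspace X \<noteq> {}"
    and W: "W \<in> nonempty_opens (Ck X)" and U: "U \<in> nbhds_of_set X (fst (KD X (gW W) W))"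
  shows "shf X n U W \<in> W" "shf X n U W \<in> Cfun X"
    "\<forall>y\<in>topspace X - U. shf X n U W y \<ge> real n + 1"
proof -
  have Wo: "openin (Ck X) W" "W \<noteq> {}" using W by (simp_all add: nonempty_opens_iff)
  have g: "gW W \<in> W" unfolding gW_def using Wo(2) by (simp add: some_in_eq)
  have gC: "gW W \<in> Cfun X" using g openin_subset[OF Wo(1)] Ck_topspace by blast
  define K where "K = fst (KD X (gW W) W)"
  define d where "d = snd (KD X (gW W) W)"
  have Kd: "K \<in> cpt_sets X" "d > 0" "basic_nbhd X (gW W) K d \<subseteq> W"
    using KD[OF ne Wo(1) g] unfolding K_def d_def by auto
  have cK: "compactin X K" using Kd(1) by (simp add: cpt_sets_def)
  have Ub: "openin X U" "K \<subseteq> U" using U unfolding K_def nbhds_of_set_def by auto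
  note u = ury[OF T cK Ub]
  have cont: "continuous_map X euclideanreal (\<lambda>x. gW W x + ury X K U x * (real n + 1 + \<bar>gW W x\<bar>))"
    using u Cfun_cont[OF gC] by (intro continuous_intros) auto
  show sC: "shf X n U W \<in> Cfun X" unfolding shf_def K_def[symmetric] using cont by (rule Cfun_cf)
  have "\<forall>x\<in>K. \<bar>gW W x - shf X n U W x\<bar> < d"
  proof
    fix x assume x: "x \<in> K"
    then have "x \<in> topspace X" using compactin_subset_topspace[OF cK] by blast
    then have "shf X n U W x = gW W x" using u x unfolding shf_def K_def[symmetric] by (simp add: cf_eq)
    then show "\<bar>gW W x - shf X n U W x\<bar> < d" using Kd(2) by simp
  qed
  then have "shf X n U W \<in> basic_nbhd X (gW W) K d" using sC unfolding basic_nbhd_def by blast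
  then show "shf X n U W \<in> W" using Kd(3) by blast
  show "\<forall>y\<in>topspace X - U. shf X n U W y \<ge> real n + 1"
  proof
    fix y assume y: "y \<in> topspace X - U"
    then have "shf X n U W y = gW W y + (real n + 1 + \<bar>gW W y\<bar>)"
      using u unfolding shf_def K_def[symmetric] by (simp add: cf_eq)
    then show "shf X n U W y \<ge> real n + 1" by linarith
  qed
qed

lemma T23_common:
  assumes T: "Tychonoff_space X" and ne: "topspace X \<noteq> {}"
    and a: "\<forall>n. a n \<in> nonempty_opens (Ck X)"
    and b: "\<forall>n. b n \<in> nbhds_of_set X (fst (KD X (gW (a n)) (a n)))"
    and nb: "range b \<notin> omega_covers X"
  shows "\<exists>F. finite F \<and> F \<subseteq> topspace X \<and> F \<noteq> {} \<and> (\<forall>n. \<exists>y\<in>F. shf X n (b n) (a n) y \<ge> real n + 1)"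
proof -
  have bo: "\<forall>n. openin X (b n) \<and> b n \<noteq> topspace X" using b unfolding nbhds_of_set_def by auto
  obtain F where F: "finite F" "F \<subseteq> topspace X" "\<forall>n. \<not> F \<subseteq> b n"
    using not_omega[OF bo nb] by meson
  have "\<exists>y\<in>F. shf X n (b n) (a n) y \<ge> real n + 1" for n
  proof -
    obtain y where y: "y \<in> F" "y \<notin> b n" using F(3) by blast
    then have "y \<in> topspace X - b n" using F(2) by blast
    then show ?thesis using shf_props(3)[OF T ne a[rule_format, of n] b[rule_format, of n]] y(1) by blast
  qed
  moreover have "F \<noteq> {}" using F(3) by blast
  ultimately show ?thesis using F(1,2) by blast
qed

lemma T2:
  assumes T: "Tychonoff_space X" and ne: "topspace X \<noteq> {}"
  shows "game_le_II (G1_neg (nbhds_cpt X) (omega_covers X))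
           (G1 (nonempty_opens (Ck X)) (closed_discrete_sets (Cp X)))"
proof (rule translation[where Ir = "\<lambda>n W. nbhds_of_set X (fst (KD X (gW W) W))"
      and IIr = "\<lambda>n U W. shf X n U W"])
  fix n and a :: "('a \<Rightarrow> real) set"
  assume "a \<in> fst (G1 (nonempty_opens (Ck X)) (closed_discrete_sets (Cp X)))"
  then have a: "openin (Ck X) a" "a \<noteq> {}" by (simp_all add: nonempty_opens_iff)
  have g: "gW a \<in> a" unfolding gW_def using a(2) by (simp add: some_in_eq)
  have "fst (KD X (gW a) a) \<in> cpt_sets X" using KD[OF ne a(1) g] by blast
  then show "nbhds_of_set X (fst (KD X (gW a) a)) \<in> fst (G1_neg (nbhds_cpt X) (omega_covers X))"
    by (simp add: nbhds_cpt_def)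
next
  fix n and a :: "('a \<Rightarrow> real) set" and b
  assume "a \<in> fst (G1 (nonempty_opens (Ck X)) (closed_discrete_sets (Cp X)))"
    and "b \<in> nbhds_of_set X (fst (KD X (gW a) a))"
  then show "shf X n b a \<in> a" using shf_props(1)[OF T ne] by simp
next
  fix a :: "nat \<Rightarrow> ('a \<Rightarrow> real) set" and b :: "nat \<Rightarrow> 'a set"
  assume a: "\<forall>n. a n \<in> fst (G1 (nonempty_opens (Ck X)) (closed_discrete_sets (Cp X)))"
    and b: "\<forall>n. b n \<in> nbhds_of_set X (fst (KD X (gW (a n)) (a n)))"
    and sG: "snd (G1_neg (nbhds_cpt X) (omega_covers X)) b"
  have a': "\<forall>n. a n \<in> nonempty_opens (Ck X)" using a by simp
  define c where "c = (\<lambda>n. shf X n (b n) (a n))"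
  have nb: "range b \<notin> omega_covers X" using sG by simp
  obtain F where F: "finite F" "F \<subseteq> topspace X" "F \<noteq> {}" "\<forall>n. \<exists>y\<in>F. c n y \<ge> real n + 1"
    using T23_common[OF T ne a' b nb] unfolding c_def by blast
  have cC: "\<forall>n. c n \<in> Cfun X" unfolding c_def using shf_props(2)[OF T ne] a' b by blast
  have "range c \<in> closed_discrete_sets (Cp X)"
  proof (rule lf_closed_discrete[OF Cp_t1])
    show "range c \<subseteq> topspace (Cp X)" using cC Cp_topspace by auto
  next
    fix h assume h: "h \<in> topspace (Cp X)"
    then have hC: "h \<in> Cfun X" using Cp_topspace by blast
    define M where "M = (\<Sum>y\<in>F. \<bar>h y\<bar>)"
    have hM: "\<forall>y\<in>F. \<bar>h y\<bar> \<le> M" unfolding M_def using F(1) by (auto intro: member_le_sum)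
    define V where "V = basic_nbhd X h F 1"
    have "openin (Cp X) V" unfolding V_def using Cp_basic_open[OF hC F(1,2)] by simp
    moreover have "h \<in> V" unfolding V_def basic_nbhd_def using hC by simp
    moreover have "finite (V \<inter> range c)"
    proof -
      have "V \<inter> range c \<subseteq> c ` {n. real n < M}"
      proof
        fix s assume "s \<in> V \<inter> range c"
        then obtain n where n: "s = c n" "c n \<in> V" by blast
        obtain y where y: "y \<in> F" "c n y \<ge> real n + 1" using F(4) by blast
        have "\<bar>h y - c n y\<bar> < 1" using n(2) y(1) unfolding V_def basic_nbhd_def by blast
        then have "real n < M" using y(2) hM y(1) by fastforce
        then show "s \<in> c ` {n. real n < M}" using n(1) by blast
      qed
      moreover have "finite {n. real n < M}"
        unfolding finite_nat_set_iff_bounded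
        by (rule exI[of _ "nat \<lceil>M\<rceil>"]) (use real_nat_ceiling_ge[of M] in auto)
      ultimately show ?thesis using finite_subset by blast
    qed
    ultimately show "\<exists>V. openin (Cp X) V \<and> h \<in> V \<and> finite (V \<inter> range c)" by blast
  qed
  then show "snd (G1 (nonempty_opens (Ck X)) (closed_discrete_sets (Cp X))) (\<lambda>n. shf X n (b n) (a n))"
    unfolding c_def by simp
qed

lemma T3:
  assumes T: "Tychonoff_space X" and ne: "topspace X \<noteq> {}"
  shows "game_le_II (G1_neg (nbhds_cpt X) (omega_covers X))
           (G1_neg (nonempty_opens (Ck X)) (clustering_sets (Cp X) zero_fun))"
proof (rule translation[where Ir = "\<lambda>n W. nbhds_of_set X (fst (KD X (gW W) W))"
      and IIr = "\<lambda>n U W. shf X n U W"])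
  fix n and a :: "('a \<Rightarrow> real) set"
  assume "a \<in> fst (G1_neg (nonempty_opens (Ck X)) (clustering_sets (Cp X) zero_fun))"
  then have a: "openin (Ck X) a" "a \<noteq> {}" by (simp_all add: nonempty_opens_iff)
  have g: "gW a \<in> a" unfolding gW_def using a(2) by (simp add: some_in_eq)
  have "fst (KD X (gW a) a) \<in> cpt_sets X" using KD[OF ne a(1) g] by blast
  then show "nbhds_of_set X (fst (KD X (gW a) a)) \<in> fst (G1_neg (nbhds_cpt X) (omega_covers X))"
    by (simp add: nbhds_cpt_def)
next
  fix n and a :: "('a \<Rightarrow> real) set" and b
  assume "a \<in> fst (G1_neg (nonempty_opens (Ck X)) (clustering_sets (Cp X) zero_fun))"
    and "b \<in> nbhds_of_set X (fst (KD X (gW a) a))"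
  then show "shf X n b a \<in> a" using shf_props(1)[OF T ne] by simp
next
  fix a :: "nat \<Rightarrow> ('a \<Rightarrow> real) set" and b :: "nat \<Rightarrow> 'a set"
  assume a: "\<forall>n. a n \<in> fst (G1_neg (nonempty_opens (Ck X)) (clustering_sets (Cp X) zero_fun))"
    and b: "\<forall>n. b n \<in> nbhds_of_set X (fst (KD X (gW (a n)) (a n)))"
    and sG: "snd (G1_neg (nbhds_cpt X) (omega_covers X)) b"
  have a': "\<forall>n. a n \<in> nonempty_opens (Ck X)" using a by simp
  define c where "c = (\<lambda>n. shf X n (b n) (a n))"
  have nb: "range b \<notin> omega_covers X" using sG by simp
  obtain F where F: "finite F" "F \<subseteq> topspace X" "F \<noteq> {}" "\<forall>n. \<exists>y\<in>F. c n y \<ge> real n + 1"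
    using T23_common[OF T ne a' b nb] unfolding c_def by blast
  have cC: "\<forall>n. c n \<in> Cfun X" unfolding c_def using shf_props(2)[OF T ne] a' b by blast
  have "zero_fun \<notin> Cp X closure_of range c"
  proof
    assume z: "zero_fun \<in> Cp X closure_of range c"
    have rc: "range c \<subseteq> Cfun X" using cC by auto
    have "\<forall>F d. finite F \<longrightarrow> F \<subseteq> topspace X \<longrightarrow> d > 0 \<longrightarrow> (\<exists>s\<in>range c. \<forall>x\<in>F. \<bar>s x\<bar> < d)"
      using Cp_closure_zero[OF rc] z by blast
    then have "\<exists>s\<in>range c. \<forall>y\<in>F. \<bar>s y\<bar> < 1" using F(1,2) by simp
    then obtain n where n: "\<forall>y\<in>F. \<bar>c n y\<bar> < 1" by blast
    obtain y where "y \<in> F" "c n y \<ge> real n + 1" using F(4) by blast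
    then show False using n by fastforce
  qed
  then show "snd (G1_neg (nonempty_opens (Ck X)) (clustering_sets (Cp X) zero_fun)) (\<lambda>n. shf X n (b n) (a n))"
    unfolding c_def clustering_sets_def by simp
qed


lemma T4:
  shows "game_le_II (G1_neg (nonempty_opens (Ck X)) (clustering_sets (Cp X) zero_fun))
           (G1_neg (nbhds_pt (Ck X) zero_fun) (clustering_sets (Cp X) zero_fun))"
proof (rule translation[where Ir = "\<lambda>n W. W" and IIr = "\<lambda>n f W. f"])
  fix n and a :: "('a \<Rightarrow> real) set"
  assume "a \<in> fst (G1_neg (nbhds_pt (Ck X) zero_fun) (clustering_sets (Cp X) zero_fun))"
  then show "a \<in> fst (G1_neg (nonempty_opens (Ck X)) (clustering_sets (Cp X) zero_fun))"
    by (auto simp: nbhds_pt_def nonempty_opens_def)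
next
  fix n and a :: "('a \<Rightarrow> real) set" and b assume "b \<in> a" then show "b \<in> a" .
next
  fix a :: "nat \<Rightarrow> ('a \<Rightarrow> real) set" and b :: "nat \<Rightarrow> 'a \<Rightarrow> real"
  assume "snd (G1_neg (nonempty_opens (Ck X)) (clustering_sets (Cp X) zero_fun)) b"
  then show "snd (G1_neg (nbhds_pt (Ck X) zero_fun) (clustering_sets (Cp X) zero_fun)) (\<lambda>n. b n)"
    by simp
qed

definition smallV :: "'a topology \<Rightarrow> nat \<Rightarrow> ('a \<Rightarrow> real) \<Rightarrow> 'a set" where
  "smallV X n f = {x \<in> topspace X. \<bar>f x\<bar> < 1 / (real n + 1)}"

definition IIs :: "'a topology \<Rightarrow> nat \<Rightarrow> ('a \<Rightarrow> real) \<Rightarrow> 'a set set \<Rightarrow> 'a set" where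
  "IIs X n f N = (if smallV X n f \<noteq> topspace X then smallV X n f else (SOME U. U \<in> N))"

lemma IIs_in:
  assumes T: "Tychonoff_space X" and nc: "\<not> compactin X (topspace X)"
    and N: "N \<in> nbhds_cpt X" and f: "f \<in> Cfun X" and small: "\<forall>x\<in>KN X N. \<bar>f x\<bar> < 1 / (real n + 1)"
  shows "IIs X n f N \<in> N"
proof -
  define K where "K = KN X N"
  have K: "K \<in> cpt_sets X" "N = nbhds_of_set X K" using KN[OF N] unfolding K_def by auto
  have cK: "compactin X K" using K(1) by (simp add: cpt_sets_def)
  have Kt: "K \<subseteq> topspace X" using compactin_subset_topspace[OF cK] .
  show ?thesis
  proof (cases "smallV X n f \<noteq> topspace X")
    case True
    have "openin X {x \<in> topspace X. \<bar>f x\<bar> \<in> {..<1 / (real n + 1)}}"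
    proof (rule openin_continuous_map_preimage)
      show "continuous_map X euclideanreal (\<lambda>x. \<bar>f x\<bar>)" using Cfun_cont[OF f] by (intro continuous_intros)
      show "openin euclideanreal {..<1 / (real n + 1)}" by simp
    qed
    then have o: "openin X (smallV X n f)" unfolding smallV_def by simp
    have "K \<subseteq> smallV X n f" using Kt small unfolding smallV_def K_def by auto
    then have "smallV X n f \<in> N" using K(2) o True unfolding nbhds_of_set_def by blast
    then show ?thesis using True unfolding IIs_def by simp
  next
    case False
    have "K \<noteq> topspace X" using cK nc by blast
    then obtain p where p: "p \<in> topspace X" "p \<notin> K" using Kt by blast
    have "topspace X - {p} \<in> N"
      using K(2) open_minus_pt[OF T] p Kt unfolding nbhds_of_set_def by auto
    then have "(SOME U. U \<in> N) \<in> N" by (rule someI)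
    then show ?thesis using False unfolding IIs_def by simp
  qed
qed

lemma closure_from_omega:
  assumes b: "\<forall>n. b n \<in> Cfun X" and c: "\<forall>n. c n = IIs X n (b n) (a n)"
    and cne: "\<forall>n. c n \<noteq> topspace X" and om: "range c \<in> omega_covers X"
  shows "zero_fun \<in> Cp X closure_of range b"
proof (rule zero_closure_crit[OF b])
  fix F N assume F: "finite F" "F \<subseteq> topspace X"
  obtain n where n: "n \<ge> N" "F \<subseteq> c n" using omega_inf[OF cne om F] by blast
  have "F \<subseteq> smallV X n (b n)"
  proof (cases "smallV X n (b n) \<noteq> topspace X")
    case True then show ?thesis using n(2) c unfolding IIs_def by simp
  next
    case False then show ?thesis using F(2) by simp
  qed
  then have "\<forall>y\<in>F. \<bar>b n y\<bar> < 1 / (real n + 1)" unfolding smallV_def by blast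
  then show "\<exists>n\<ge>N. \<forall>y\<in>F. \<bar>b n y\<bar> < 1 / (real n + 1)" using n(1) by blast
qed

lemma T5:
  assumes T: "Tychonoff_space X" and nc: "\<not> compactin X (topspace X)"
  shows "game_le_II (G1_neg (nbhds_pt (Ck X) zero_fun) (clustering_sets (Cp X) zero_fun))
           (G1_neg (nbhds_cpt X) (omega_covers X))"
proof (rule translation[where Ir = "\<lambda>n N. basic_nbhd X zero_fun (KN X N) (1 / (real n + 1))"
      and IIr = "\<lambda>n f N. IIs X n f N"])
  fix n and a :: "'a set set"
  assume "a \<in> fst (G1_neg (nbhds_cpt X) (omega_covers X))"
  then have a: "a \<in> nbhds_cpt X" by simp
  have cK: "compactin X (KN X a)" using KN[OF a] cpt_setsD by blast
  have "openin (Ck X) (basic_nbhd X zero_fun (KN X a) (1 / (real n + 1)))"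
    by (rule Ck_basic_open[OF zero_Cfun cK]) simp
  moreover have "zero_fun \<in> basic_nbhd X zero_fun (KN X a) (1 / (real n + 1))"
    using zero_Cfun unfolding basic_nbhd_def by simp
  ultimately show "basic_nbhd X zero_fun (KN X a) (1 / (real n + 1))
      \<in> fst (G1_neg (nbhds_pt (Ck X) zero_fun) (clustering_sets (Cp X) zero_fun))"
    by (simp add: nbhds_pt_iff)
next
  fix n and a :: "'a set set" and b
  assume a: "a \<in> fst (G1_neg (nbhds_cpt X) (omega_covers X))"
    and b: "b \<in> basic_nbhd X zero_fun (KN X a) (1 / (real n + 1))"
  have bC: "b \<in> Cfun X" and bs: "\<forall>x\<in>KN X a. \<bar>b x\<bar> < 1 / (real n + 1)"
    using b unfolding basic_nbhd_def zero_fun_def by auto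
  show "IIs X n b a \<in> a" using IIs_in[OF T nc _ bC bs] a by simp
next
  fix a :: "nat \<Rightarrow> 'a set set" and b :: "nat \<Rightarrow> 'a \<Rightarrow> real"
  assume a: "\<forall>n. a n \<in> fst (G1_neg (nbhds_cpt X) (omega_covers X))"
    and b: "\<forall>n. b n \<in> basic_nbhd X zero_fun (KN X (a n)) (1 / (real n + 1))"
    and sG: "snd (G1_neg (nbhds_pt (Ck X) zero_fun) (clustering_sets (Cp X) zero_fun)) b"
  have a': "\<forall>n. a n \<in> nbhds_cpt X" using a by simp
  have bC: "\<forall>n. b n \<in> Cfun X" and bs: "\<forall>n. \<forall>x\<in>KN X (a n). \<bar>b n x\<bar> < 1 / (real n + 1)"
    using b unfolding basic_nbhd_def zero_fun_def by auto
  define c where "c = (\<lambda>n. IIs X n (b n) (a n))"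
  have cin: "c n \<in> a n" for n unfolding c_def using IIs_in[OF T nc] a' bC bs by blast
  have cne: "\<forall>n. c n \<noteq> topspace X" using cin a' nbhds_cpt_memD by blast
  have "range c \<notin> omega_covers X"
  proof
    assume om: "range c \<in> omega_covers X"
    have "zero_fun \<in> Cp X closure_of range b"
      using closure_from_omega[OF bC _ cne om] unfolding c_def by blast
    moreover have "range b \<subseteq> topspace (Cp X)" using bC Cp_topspace by auto
    ultimately have "range b \<in> clustering_sets (Cp X) zero_fun" unfolding clustering_sets_def by blast
    then show False using sG by simp
  qed
  then show "snd (G1_neg (nbhds_cpt X) (omega_covers X)) (\<lambda>n. IIs X n (b n) (a n))"
    unfolding c_def by simp
qed

definition cst :: "'a topology \<Rightarrow> nat \<Rightarrow> 'a \<Rightarrow> real" where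
  "cst X n = cf X (\<lambda>_. 1 / (2 * (real n + 1)))"

lemma cst_Cfun: "cst X n \<in> Cfun X"
  unfolding cst_def by (rule Cfun_cf) simp

lemma T6:
  assumes T: "Tychonoff_space X" and nc: "\<not> compactin X (topspace X)"
  shows "game_le_II (G1 (nonempty_opens (Ck X)) (closed_discrete_sets (Cp X)))
           (G1_neg (nbhds_cpt X) (omega_covers X))"
proof (rule translation[where Ir = "\<lambda>n N. basic_nbhd X (cst X n) (KN X N) (1 / (2 * (real n + 1)))"
      and IIr = "\<lambda>n f N. IIs X n f N"])
  fix n and a :: "'a set set"
  assume "a \<in> fst (G1_neg (nbhds_cpt X) (omega_covers X))"
  then have a: "a \<in> nbhds_cpt X" by simp
  have cK: "compactin X (KN X a)" using KN[OF a] cpt_setsD by blast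
  have "openin (Ck X) (basic_nbhd X (cst X n) (KN X a) (1 / (2 * (real n + 1))))"
    by (rule Ck_basic_open[OF cst_Cfun cK]) simp
  moreover have "cst X n \<in> basic_nbhd X (cst X n) (KN X a) (1 / (2 * (real n + 1)))"
    using cst_Cfun unfolding basic_nbhd_def by simp
  ultimately show "basic_nbhd X (cst X n) (KN X a) (1 / (2 * (real n + 1)))
      \<in> fst (G1 (nonempty_opens (Ck X)) (closed_discrete_sets (Cp X)))"
    by (auto simp: nonempty_opens_def)
next
  have key: "b \<in> Cfun X \<and> (\<forall>x\<in>KN X a. \<bar>b x\<bar> < 1 / (real n + 1) \<and> b x > 0)"
    if a: "a \<in> nbhds_cpt X" and b: "b \<in> basic_nbhd X (cst X n) (KN X a) (1 / (2 * (real n + 1)))" for a b n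
  proof -
    have cK: "compactin X (KN X a)" using KN[OF a] cpt_setsD by blast
    have bC: "b \<in> Cfun X" using b unfolding basic_nbhd_def by auto
    have "\<bar>b x\<bar> < 1 / (real n + 1) \<and> b x > 0" if x: "x \<in> KN X a" for x
    proof -
      have xt: "x \<in> topspace X" using compactin_subset_topspace[OF cK] x by blast
      have "\<bar>cst X n x - b x\<bar> < 1 / (2 * (real n + 1))"
        using b x unfolding basic_nbhd_def by blast
      moreover have "cst X n x = 1 / (2 * (real n + 1))" unfolding cst_def using xt by (simp add: cf_eq)
      ultimately have "\<bar>1 / (2 * (real n + 1)) - b x\<bar> < 1 / (2 * (real n + 1))" by simp
      moreover have "1 / (2 * (real n + 1)) + 1 / (2 * (real n + 1)) = 1 / (real n + 1)"
        by (simp add: field_simps)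
      ultimately show ?thesis by (simp add: abs_diff_less_iff abs_less_iff)
    qed
    then show ?thesis using bC by blast
  qed
  {
    fix n and a :: "'a set set" and b
    assume a: "a \<in> fst (G1_neg (nbhds_cpt X) (omega_covers X))"
      and b: "b \<in> basic_nbhd X (cst X n) (KN X a) (1 / (2 * (real n + 1)))"
    have a': "a \<in> nbhds_cpt X" using a by simp
    show "IIs X n b a \<in> a" using IIs_in[OF T nc a'] key[OF a' b] by blast
  }
  fix a :: "nat \<Rightarrow> 'a set set" and b :: "nat \<Rightarrow> 'a \<Rightarrow> real"
  assume a: "\<forall>n. a n \<in> fst (G1_neg (nbhds_cpt X) (omega_covers X))"
    and b: "\<forall>n. b n \<in> basic_nbhd X (cst X n) (KN X (a n)) (1 / (2 * (real n + 1)))"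
    and sG: "snd (G1 (nonempty_opens (Ck X)) (closed_discrete_sets (Cp X))) b"
  have a': "\<forall>n. a n \<in> nbhds_cpt X" using a by simp
  have kb: "b n \<in> Cfun X \<and> (\<forall>x\<in>KN X (a n). \<bar>b n x\<bar> < 1 / (real n + 1) \<and> b n x > 0)" for n
    using key a' b by blast
  have bC: "\<forall>n. b n \<in> Cfun X" using kb by blast
  define c where "c = (\<lambda>n. IIs X n (b n) (a n))"
  have cin: "c n \<in> a n" for n unfolding c_def using IIs_in[OF T nc] a' kb by blast
  have cne: "\<forall>n. c n \<noteq> topspace X" using cin a' nbhds_cpt_memD by blast
  have "range c \<notin> omega_covers X"
  proof
    assume om: "range c \<in> omega_covers X"
    have z: "zero_fun \<in> Cp X closure_of range b"
      using closure_from_omega[OF bC _ cne om] unfolding c_def by blast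
    have "closedin (Cp X) (range b)" using sG unfolding closed_discrete_sets_def by simp
    then have "zero_fun \<in> range b" using z closure_of_closedin by fastforce
    then obtain n where n: "zero_fun = b n" by blast
    obtain x where "x \<in> KN X (a n)" using KN[OF a'[rule_format, of n]] cpt_setsD by blast
    then have "b n x > 0" using kb by blast
    then show False using n by (simp add: zero_fun_def)
  qed
  then show "snd (G1_neg (nbhds_cpt X) (omega_covers X)) (\<lambda>n. IIs X n (b n) (a n))"
    unfolding c_def by simp
qed


lemma dual_A1B1:
  assumes ne: "topspace X \<noteq> {}"
  shows "game_dual (G1_neg (nbhds_cpt X) C) (G1 (k_covers X) C)"
proof (rule duality)
  fix U N assume "U \<in> k_covers X" "N \<in> nbhds_cpt X"
  then show "U \<inter> N \<noteq> {}" by (rule k_R1)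
next
  fix f :: "'a set set \<Rightarrow> 'a set" assume "\<forall>N\<in>nbhds_cpt X. f N \<in> N"
  then show "f ` nbhds_cpt X \<in> k_covers X" by (rule k_R2[OF ne])
qed

lemma Z_top: "zero_fun \<in> topspace (Ck X)" "zero_fun \<in> topspace (Cp X)"
  by (simp_all add: Ck_topspace Cp_topspace zero_Cfun)

lemma dual_A2B2:
  shows "game_dual (G1_neg (nbhds_pt (Ck X) zero_fun) C) (G1 (clustering_sets (Ck X) zero_fun) C)"
proof (rule duality)
  fix U N assume U: "U \<in> clustering_sets (Ck X) zero_fun" and N: "N \<in> nbhds_pt (Ck X) zero_fun"
  have "zero_fun \<in> Ck X closure_of U" using U by (simp add: clustering_sets_def)
  moreover have "openin (Ck X) N" "zero_fun \<in> N" using N by (simp_all add: nbhds_pt_iff)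
  ultimately show "U \<inter> N \<noteq> {}" unfolding in_closure_of by blast
next
  fix f :: "('a \<Rightarrow> real) set \<Rightarrow> 'a \<Rightarrow> real" assume f: "\<forall>N\<in>nbhds_pt (Ck X) zero_fun. f N \<in> N"
  have sub: "f ` nbhds_pt (Ck X) zero_fun \<subseteq> topspace (Ck X)"
    using f openin_subset unfolding nbhds_pt_def by fastforce
  have "zero_fun \<in> Ck X closure_of (f ` nbhds_pt (Ck X) zero_fun)"
    unfolding in_closure_of
  proof (intro conjI allI impI)
    show "zero_fun \<in> topspace (Ck X)" by (rule Z_top)
    fix T assume "zero_fun \<in> T \<and> openin (Ck X) T"
    then have "T \<in> nbhds_pt (Ck X) zero_fun" by (simp add: nbhds_pt_iff)
    then show "\<exists>y. y \<in> f ` nbhds_pt (Ck X) zero_fun \<and> y \<in> T" using f by blast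
  qed
  then show "f ` nbhds_pt (Ck X) zero_fun \<in> clustering_sets (Ck X) zero_fun"
    using sub unfolding clustering_sets_def by blast
qed

lemma dual_A3B3:
  shows "game_dual (G1_neg (nonempty_opens (Ck X)) C) (G1 (dense_sets (Ck X)) C)"
proof (rule duality)
  fix U N assume U: "U \<in> dense_sets (Ck X)" and N: "N \<in> nonempty_opens (Ck X)"
  then show "U \<inter> N \<noteq> {}" unfolding dense_sets_def nonempty_opens_def dense_intersects_open by blast
next
  fix f :: "('a \<Rightarrow> real) set \<Rightarrow> 'a \<Rightarrow> real" assume f: "\<forall>N\<in>nonempty_opens (Ck X). f N \<in> N"
  have sub: "f ` nonempty_opens (Ck X) \<subseteq> topspace (Ck X)"
    using f openin_subset unfolding nonempty_opens_def by fastforce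
  have "\<forall>T. openin (Ck X) T \<and> T \<noteq> {} \<longrightarrow> f ` nonempty_opens (Ck X) \<inter> T \<noteq> {}"
  proof (intro allI impI)
    fix T assume "openin (Ck X) T \<and> T \<noteq> {}"
    then have "T \<in> nonempty_opens (Ck X)" by (simp add: nonempty_opens_def)
    then show "f ` nonempty_opens (Ck X) \<inter> T \<noteq> {}" using f by blast
  qed
  then show "f ` nonempty_opens (Ck X) \<in> dense_sets (Ck X)"
    using sub unfolding dense_sets_def dense_intersects_open by blast
qed

lemma cpt_preA1:
  assumes c: "compactin X (topspace X)" and ne: "topspace X \<noteq> {}"
  shows "I_pre_wins (G1_neg (nbhds_cpt X) (omega_covers X))"
proof -
  have "topspace X \<in> cpt_sets X" using c ne by (simp add: cpt_sets_def)
  then have m: "nbhds_of_set X (topspace X) \<in> nbhds_cpt X" unfolding nbhds_cpt_def by (rule imageI)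
  have e: "nbhds_of_set X (topspace X) = {}"
    unfolding nbhds_of_set_def using openin_subset by blast
  show ?thesis unfolding I_pre_wins_def
    by (rule exI[of _ "\<lambda>n. nbhds_of_set X (topspace X)"]) (use m e in auto)
qed

lemma unif_small_closure:
  assumes x: "\<forall>n. x n \<in> Cfun X" and s: "\<forall>n. \<forall>y\<in>topspace X. \<bar>x n y\<bar> < 1 / (real n + 1)"
  shows "range x \<in> clustering_sets (Cp X) zero_fun"
proof -
  have "zero_fun \<in> Cp X closure_of range x"
  proof (rule zero_closure_crit[OF x])
    fix F N assume F: "finite F" "F \<subseteq> topspace X"
    then show "\<exists>n\<ge>N. \<forall>y\<in>F. \<bar>x n y\<bar> < 1 / (real n + 1)" using s by blast
  qed
  moreover have "range x \<subseteq> topspace (Cp X)" using x Cp_topspace by auto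
  ultimately show ?thesis unfolding clustering_sets_def by blast
qed

lemma cpt_preA2:
  assumes c: "compactin X (topspace X)"
  shows "I_pre_wins (G1_neg (nbhds_pt (Ck X) zero_fun) (clustering_sets (Cp X) zero_fun))"
    "I_pre_wins (G1_neg (nonempty_opens (Ck X)) (clustering_sets (Cp X) zero_fun))"
proof -
  define Es where "Es = (\<lambda>n::nat. basic_nbhd X zero_fun (topspace X) (1 / (real n + 1)))"
  have o: "openin (Ck X) (Es n)" for n unfolding Es_def by (rule Ck_basic_open[OF zero_Cfun c]) simp
  have z: "zero_fun \<in> Es n" for n unfolding Es_def basic_nbhd_def using zero_Cfun by (simp add: zero_fun_def)
  have win: "range x \<in> clustering_sets (Cp X) zero_fun" if x: "\<forall>n. x n \<in> Es n" for x
  proof (rule unif_small_closure)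
    show "\<forall>n. x n \<in> Cfun X" using x unfolding Es_def basic_nbhd_def by blast
    show "\<forall>n. \<forall>y\<in>topspace X. \<bar>x n y\<bar> < 1 / (real n + 1)" using x unfolding Es_def basic_nbhd_def zero_fun_def by auto
  qed
  show "I_pre_wins (G1_neg (nbhds_pt (Ck X) zero_fun) (clustering_sets (Cp X) zero_fun))"
    unfolding I_pre_wins_def using o z win by (intro exI[of _ Es]) (auto simp: nbhds_pt_iff)
  show "I_pre_wins (G1_neg (nonempty_opens (Ck X)) (clustering_sets (Cp X) zero_fun))"
    unfolding I_pre_wins_def using o z win by (intro exI[of _ Es]) (auto simp: nonempty_opens_def)
qed

lemma cpt_preA3:
  assumes c: "compactin X (topspace X)" and ne: "topspace X \<noteq> {}"
  shows "I_pre_wins (G1 (nonempty_opens (Ck X)) (closed_discrete_sets (Cp X)))"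
proof -
  define Es where "Es = (\<lambda>n::nat. basic_nbhd X (cst X n) (topspace X) (1 / (2 * (real n + 1))))"
  have o: "openin (Ck X) (Es n)" for n unfolding Es_def by (rule Ck_basic_open[OF cst_Cfun c]) simp
  have z: "cst X n \<in> Es n" for n unfolding Es_def basic_nbhd_def using cst_Cfun by simp
  have win: "range x \<notin> closed_discrete_sets (Cp X)" if x: "\<forall>n. x n \<in> Es n" for x
  proof -
    have xC: "\<forall>n. x n \<in> Cfun X" using x unfolding Es_def basic_nbhd_def by blast
    have b: "\<bar>x n y\<bar> < 1 / (real n + 1) \<and> x n y > 0" if y: "y \<in> topspace X" for n y
    proof -
      have "\<bar>cst X n y - x n y\<bar> < 1 / (2 * (real n + 1))" using x y unfolding Es_def basic_nbhd_def by blast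
      moreover have "cst X n y = 1 / (2 * (real n + 1))" unfolding cst_def using y by (simp add: cf_eq)
      moreover have "1 / (2 * (real n + 1)) + 1 / (2 * (real n + 1)) = 1 / (real n + 1)"
        by (simp add: field_simps)
      ultimately show ?thesis by (simp add: abs_diff_less_iff abs_less_iff)
    qed
    have "range x \<in> clustering_sets (Cp X) zero_fun" using unif_small_closure[OF xC] b by blast
    then have cl: "zero_fun \<in> Cp X closure_of range x" unfolding clustering_sets_def by blast
    obtain p where p: "p \<in> topspace X" using ne by blast
    have nz: "zero_fun \<notin> range x"
    proof
      assume "zero_fun \<in> range x"
      then obtain n where n: "zero_fun = x n" by blast
      have "x n p > 0" using b[OF p, of n] by blast
      moreover have "x n p = 0" using n[symmetric] by (simp add: zero_fun_def)
      ultimately show False by simp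
    qed
    show ?thesis
    proof
      assume "range x \<in> closed_discrete_sets (Cp X)"
      then have "closedin (Cp X) (range x)" unfolding closed_discrete_sets_def by blast
      then show False using cl nz closure_of_closedin by fastforce
    qed
  qed
  show ?thesis
    unfolding I_pre_wins_def using o z win by (intro exI[of _ Es]) (auto simp: nonempty_opens_def)
qed

lemma sub_one_trivial2:
  assumes "\<And>x. (\<forall>n. x n \<in> \<Union>E) \<Longrightarrow> P x \<Longrightarrow> Q x"
  shows "I_wins (E, Q) \<Longrightarrow> I_wins (E, P)" "I_pre_wins (E, Q) \<Longrightarrow> I_pre_wins (E, P)"
proof -
  assume "I_wins (E, Q)"
  then obtain \<sigma> where s: "\<forall>ls. \<sigma> ls \<in> E" "\<forall>x. (\<forall>n. x n \<in> \<sigma> (map x [0..<n])) \<longrightarrow> \<not> Q x"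
    unfolding I_wins_def by auto
  have "\<forall>x. (\<forall>n. x n \<in> \<sigma> (map x [0..<n])) \<longrightarrow> \<not> P x"
  proof (intro allI impI)
    fix x assume x: "\<forall>n. x n \<in> \<sigma> (map x [0..<n])"
    then have "\<forall>n. x n \<in> \<Union>E" using s(1) by blast
    then show "\<not> P x" using assms s(2) x by blast
  qed
  then show "I_wins (E, P)" unfolding I_wins_def using s(1) by (intro exI[of _ \<sigma>]) simp
next
  assume "I_pre_wins (E, Q)"
  then obtain Es :: "nat \<Rightarrow> _" where s: "\<forall>n. Es n \<in> E" "\<forall>x. (\<forall>n. x n \<in> Es n) \<longrightarrow> \<not> Q x"
    unfolding I_pre_wins_def by auto
  have "\<forall>x. (\<forall>n. x n \<in> Es n) \<longrightarrow> \<not> P x"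
  proof (intro allI impI)
    fix x assume x: "\<forall>n. x n \<in> Es n"
    then have "\<forall>n. x n \<in> \<Union>E" using s(1) by blast
    then show "\<not> P x" using assms s(2) x by blast
  qed
  then show "I_pre_wins (E, P)" unfolding I_pre_wins_def using s(1) by (intro exI[of _ Es]) simp
qed

lemma C1A1:
  shows "game_equiv_One (G1_neg (nbhds_cpt X) (gamma_covers X)) (G1_neg (nbhds_cpt X) (omega_covers X))"
proof -
  let ?P = "\<lambda>x. range x \<notin> omega_covers X" and ?Q = "\<lambda>x. range x \<notin> gamma_covers X"
  have e1: "G1_neg (nbhds_cpt X) (gamma_covers X) = (nbhds_cpt X, ?Q)" by (simp add: G1_neg_def)
  have e2: "G1_neg (nbhds_cpt X) (omega_covers X) = (nbhds_cpt X, ?P)" by (simp add: G1_neg_def)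
  have PQ: "?P x \<Longrightarrow> ?Q x" for x :: "nat \<Rightarrow> 'a set" using gamma_sub_omega by blast
  have sub: "\<exists>r::nat \<Rightarrow> nat. strict_mono r \<and> ?P (x \<circ> r)" if "\<forall>n. x n \<in> \<Union>(nbhds_cpt X)" "?Q x" for x :: "nat \<Rightarrow> 'a set"
    using sub_gamma[OF that] by blast
  note A = sub_one[of "nbhds_cpt X" ?Q ?P, OF dir_cpt sub]
  note B = sub_one_trivial[of ?P ?Q "nbhds_cpt X", OF PQ]
  show ?thesis unfolding game_equiv_One_def e1 e2 using A B by blast
qed

lemma limitin_closure:
  assumes "limitin Y x l sequentially"
  shows "l \<in> Y closure_of range x"
  unfolding in_closure_of
proof (intro conjI allI impI)
  show "l \<in> topspace Y" using assms by (simp add: limitin_def)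
  fix T assume "l \<in> T \<and> openin Y T"
  then have "eventually (\<lambda>n. x n \<in> T) sequentially" using assms by (simp add: limitin_def)
  then obtain N where "\<forall>n\<ge>N. x n \<in> T" by (auto simp: eventually_sequentially)
  then show "\<exists>y. y \<in> range x \<and> y \<in> T" by blast
qed

lemma C2A2:
  shows "game_equiv_One ((nbhds_pt (Ck X) zero_fun, \<lambda>x. \<not> limitin (Cp X) x zero_fun sequentially) :: ('a \<Rightarrow> real) game)
     (G1_neg (nbhds_pt (Ck X) zero_fun) (clustering_sets (Cp X) zero_fun))"
proof -
  let ?E = "nbhds_pt (Ck X) zero_fun"
  let ?P = "\<lambda>x. range x \<notin> clustering_sets (Cp X) zero_fun" and ?Q = "\<lambda>x. \<not> limitin (Cp X) x zero_fun sequentially"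
  have e2: "G1_neg ?E (clustering_sets (Cp X) zero_fun) = (?E, ?P)" by (simp add: G1_neg_def)
  have PQ: "?Q x" if x: "\<forall>n. x n \<in> \<Union>?E" and P: "?P x" for x :: "nat \<Rightarrow> 'a \<Rightarrow> real"
  proof
    assume "limitin (Cp X) x zero_fun sequentially"
    then have "zero_fun \<in> Cp X closure_of range x" by (rule limitin_closure)
    moreover have "range x \<subseteq> topspace (Cp X)"
    proof -
      have "\<forall>n. x n \<in> Cfun X" using x openin_subset Ck_topspace unfolding nbhds_pt_def by fastforce
      then show ?thesis using Cp_topspace by auto
    qed
    ultimately show False using P unfolding clustering_sets_def by blast
  qed
  have dir: "\<exists>M\<in>?E. \<forall>s\<in>S. M \<subseteq> s" if S: "finite S" "S \<subseteq> ?E" "S \<noteq> {}" for S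
  proof -
    have "openin (Ck X) (\<Inter>S)" using S by (intro openin_Inter) (auto simp: nbhds_pt_iff)
    moreover have "zero_fun \<in> \<Inter>S" using S by (auto simp: nbhds_pt_iff)
    ultimately show ?thesis by (intro bexI[of _ "\<Inter>S"]) (auto simp: nbhds_pt_iff)
  qed
  have sub: "\<exists>r::nat \<Rightarrow> nat. strict_mono r \<and> ?P (x \<circ> r)" if nq: "?Q x" for x :: "nat \<Rightarrow> 'a \<Rightarrow> real"
  proof -
    obtain U where U: "openin (Cp X) U" "zero_fun \<in> U" "\<not> eventually (\<lambda>n. x n \<in> U) sequentially"
      using nq Z_top(2) unfolding limitin_def by blast
    obtain r :: "nat \<Rightarrow> nat" where r: "strict_mono r" "\<forall>n. \<not> x (r n) \<in> U"
      using not_eventually_sequentiallyD[OF U(3)] by blast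
    have "zero_fun \<notin> Cp X closure_of range (x \<circ> r)"
      using U(1,2) r(2) unfolding in_closure_of by auto
    then have "?P (x \<circ> r)" unfolding clustering_sets_def by blast
    then show ?thesis using r(1) by blast
  qed
  note A = sub_one[of ?E ?Q ?P, OF dir sub, simplified]
  note B = sub_one_trivial2[of ?E ?P ?Q, OF PQ]
  show ?thesis unfolding game_equiv_One_def e2 using A B by blast
qed


lemma sigma_Kc:
  assumes "sigma_compact_space X"
  shows "\<exists>Kc :: nat \<Rightarrow> 'a set. (\<forall>n. compactin X (Kc n)) \<and>
           (\<forall>F. finite F \<longrightarrow> F \<subseteq> topspace X \<longrightarrow> (\<exists>n. F \<subseteq> Kc n))"
proof -
  obtain K :: "nat \<Rightarrow> 'a set" where K: "\<forall>n. compactin X (K n)" "\<Union>(range K) = topspace X"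
    using assms unfolding sigma_compact_space_def by blast
  define Kc where "Kc = (\<lambda>n. \<Union>(K ` {..n}))"
  have "compactin X (Kc n)" for n unfolding Kc_def using K(1) by (intro compactin_Union) auto
  moreover have "\<exists>n. F \<subseteq> Kc n" if F: "finite F" "F \<subseteq> topspace X" for F
  proof -
    have "\<forall>y\<in>F. \<exists>m. y \<in> K m" using F(2) K(2) by blast
    then obtain m where m: "\<forall>y\<in>F. y \<in> K (m y)" by metis
    define n where "n = (\<Sum>y\<in>F. m y)"
    have "m y \<le> n" if "y \<in> F" for y unfolding n_def using F(1) that by (simp add: member_le_sum)
    then have "F \<subseteq> Kc n" using m unfolding Kc_def by fastforce
    then show ?thesis by blast
  qed
  ultimately show ?thesis by blast
qed

lemma sigma_preA1:
  assumes T: "Tychonoff_space X" and ne: "topspace X \<noteq> {}"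
  shows "I_pre_wins (G1_neg (nbhds_cpt X) (omega_covers X)) \<longleftrightarrow> sigma_compact_space X"
proof
  assume sc: "sigma_compact_space X"
  obtain Kc :: "nat \<Rightarrow> 'a set" where Kc: "\<forall>n. compactin X (Kc n)"
    "\<forall>F. finite F \<longrightarrow> F \<subseteq> topspace X \<longrightarrow> (\<exists>n. F \<subseteq> Kc n)"
    using sigma_Kc[OF sc] by meson
  obtain p where p: "p \<in> topspace X" using ne by blast
  define Es where "Es = (\<lambda>n. nbhds_of_set X (insert p (Kc n)))"
  have Es: "Es n \<in> nbhds_cpt X" for n
  proof -
    have "compactin X (insert p (Kc n))" using compactin_Un[of X "{p}" "Kc n"] Kc(1) p by simp
    then have "insert p (Kc n) \<in> cpt_sets X" by (simp add: cpt_sets_def)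
    then show ?thesis unfolding Es_def nbhds_cpt_def by (rule imageI)
  qed
  have win: "range x \<in> omega_covers X" if x: "\<forall>n. x n \<in> Es n" for x
  proof -
    have xo: "\<forall>n. openin X (x n) \<and> x n \<noteq> topspace X \<and> Kc n \<subseteq> x n"
      using x unfolding Es_def nbhds_of_set_def by auto
    have fin: "\<exists>V\<in>range x. F \<subseteq> V" if F: "finite F" "F \<subseteq> topspace X" for F
    proof -
      obtain n where "F \<subseteq> Kc n" using Kc(2) F by blast
      then have "F \<subseteq> x n" using xo by blast
      then show ?thesis by blast
    qed
    have cov: "\<Union>(range x) = topspace X"
    proof
      show "\<Union>(range x) \<subseteq> topspace X" using xo openin_subset by blast
      show "topspace X \<subseteq> \<Union>(range x)"
      proof
        fix y assume "y \<in> topspace X"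
        then obtain V where "V \<in> range x" "{y} \<subseteq> V" using fin[of "{y}"] by auto
        then show "y \<in> \<Union>(range x)" by blast
      qed
    qed
    have nt: "topspace X \<notin> range x" using xo by (metis rangeE)
    show ?thesis unfolding omega_covers_def open_covers_def mem_Collect_eq
    proof (intro conjI)
      show "\<forall>U\<in>range x. openin X U" using xo by blast
      show "\<Union>(range x) = topspace X" by (rule cov)
      show "topspace X \<notin> range x" by (rule nt)
      show "\<forall>F. finite F \<and> F \<subseteq> topspace X \<longrightarrow> (\<exists>U\<in>range x. F \<subseteq> U)" using fin by blast
    qed
  qed
  show "I_pre_wins (G1_neg (nbhds_cpt X) (omega_covers X))"
    unfolding I_pre_wins_def using Es win by (intro exI[of _ Es]) simp
next
  assume "I_pre_wins (G1_neg (nbhds_cpt X) (omega_covers X))"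
  then obtain Es :: "nat \<Rightarrow> 'a set set" where Es: "\<forall>n. Es n \<in> nbhds_cpt X"
    "\<forall>x. (\<forall>n. x n \<in> Es n) \<longrightarrow> range x \<in> omega_covers X"
    unfolding I_pre_wins_def by auto
  define K where "K = (\<lambda>n. KN X (Es n))"
  have K: "K n \<in> cpt_sets X" "Es n = nbhds_of_set X (K n)" for n
    using KN Es(1) unfolding K_def by blast+
  have cK: "compactin X (K n)" for n using K(1) by (simp add: cpt_sets_def)
  have "\<Union>(range K) = topspace X"
  proof
    show "\<Union>(range K) \<subseteq> topspace X" using cK compactin_subset_topspace by blast
    show "topspace X \<subseteq> \<Union>(range K)"
    proof
      fix y assume y: "y \<in> topspace X"
      show "y \<in> \<Union>(range K)"
      proof (rule ccontr)
        assume ny: "y \<notin> \<Union>(range K)"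
        define x where "x = (\<lambda>n::nat. topspace X - {y})"
        have "x n \<in> Es n" for n
        proof -
          have "K n \<subseteq> topspace X" using cK compactin_subset_topspace by blast
          then have "K n \<subseteq> x n" using ny unfolding x_def by blast
          moreover have "openin X (x n)" unfolding x_def by (rule open_minus_pt[OF T])
          moreover have "x n \<noteq> topspace X" using y unfolding x_def by blast
          ultimately show ?thesis using K(2) unfolding nbhds_of_set_def by blast
        qed
        then have "range x \<in> omega_covers X" using Es(2) by blast
        then have "\<Union>(range x) = topspace X" by (simp add: omega_covers_def open_covers_def)
        then show False using y unfolding x_def by blast
      qed
    qed
  qed
  then show "sigma_compact_space X" unfolding sigma_compact_space_def using cK by blast
qed

lemma no_finite_cof:
  assumes ne: "topspace X \<noteq> {}"
  shows "\<not> (\<exists>\<A>. finite \<A> \<and> cofinal_family (nbhds_pt (Ck X) zero_fun) (nbhds_pt (Cp X) zero_fun) \<A>)"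
proof
  assume "\<exists>\<A>. finite \<A> \<and> cofinal_family (nbhds_pt (Ck X) zero_fun) (nbhds_pt (Cp X) zero_fun) \<A>"
  then obtain \<A> where fin: "finite \<A>" and sub: "\<A> \<subseteq> nbhds_pt (Ck X) zero_fun"
    and cof: "\<forall>F\<in>nbhds_pt (Cp X) zero_fun. \<exists>E\<in>\<A>. E \<subseteq> F"
    unfolding cofinal_family_def by blast
  obtain p where p: "p \<in> topspace X" using ne by blast
  have "Cfun X \<in> nbhds_pt (Cp X) zero_fun"
    using Z_top(2) unfolding nbhds_pt_iff by (metis Cp_topspace openin_topspace)
  then have Ane: "\<A> \<noteq> {}" using cof by blast
  have "\<forall>A\<in>\<A>. \<exists>d. d > 0 \<and> (\<exists>K. compactin X K \<and> basic_nbhd X zero_fun K d \<subseteq> A)"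
  proof
    fix A assume "A \<in> \<A>"
    then have "openin (Ck X) A" "zero_fun \<in> A" using sub by (auto simp: nbhds_pt_iff)
    then show "\<exists>d. d > 0 \<and> (\<exists>K. compactin X K \<and> basic_nbhd X zero_fun K d \<subseteq> A)"
      using Ck_local[of X A zero_fun] by blast
  qed
  then obtain dd KK where dK: "\<forall>A\<in>\<A>. dd A > 0 \<and> compactin X (KK A) \<and> basic_nbhd X zero_fun (KK A) (dd A) \<subseteq> A"
    by metis
  define \<delta> where "\<delta> = Min (dd ` \<A>) / 2"
  have Mpos: "Min (dd ` \<A>) > 0" using fin Ane dK by (simp add: Min_gr_iff)
  then have dpos: "\<delta> > 0" unfolding \<delta>_def by simp
  have dlt: "\<delta> < dd A" if "A \<in> \<A>" for A
  proof -
    have "Min (dd ` \<A>) \<le> dd A" using fin that by simp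
    then show ?thesis using Mpos unfolding \<delta>_def by simp
  qed
  define F0 where "F0 = basic_nbhd X zero_fun {p} \<delta>"
  have "openin (Cp X) F0" unfolding F0_def by (rule Cp_basic_open[OF zero_Cfun]) (use p dpos in auto)
  moreover have "zero_fun \<in> F0" unfolding F0_def basic_nbhd_def using zero_Cfun dpos by (simp add: zero_fun_def)
  ultimately have "F0 \<in> nbhds_pt (Cp X) zero_fun" by (simp add: nbhds_pt_iff)
  then obtain A where A: "A \<in> \<A>" "A \<subseteq> F0" using cof by blast
  define h where "h = cf X (\<lambda>_. \<delta>)"
  have hC: "h \<in> Cfun X" unfolding h_def by (rule Cfun_cf) simp
  have "\<forall>x\<in>KK A. \<bar>zero_fun x - h x\<bar> < dd A"
  proof
    fix x assume "x \<in> KK A"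
    have "\<bar>h x\<bar> \<le> \<delta>" unfolding h_def cf_def using dpos by auto
    then show "\<bar>zero_fun x - h x\<bar> < dd A" using dlt[OF A(1)] by (simp add: zero_fun_def)
  qed
  then have "h \<in> basic_nbhd X zero_fun (KK A) (dd A)" using hC unfolding basic_nbhd_def by blast
  then have "h \<in> F0" using dK A by blast
  then have "\<bar>zero_fun p - h p\<bar> < \<delta>" unfolding F0_def basic_nbhd_def by blast
  moreover have "h p = \<delta>" unfolding h_def using p by (simp add: cf_eq)
  ultimately show False by (simp add: zero_fun_def)
qed

lemma sigma_cof:
  assumes T: "Tychonoff_space X" and ne: "topspace X \<noteq> {}"
  shows "sigma_compact_space X \<longleftrightarrow> cof_is_omega (nbhds_pt (Ck X) zero_fun) (nbhds_pt (Cp X) zero_fun)"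
proof
  assume sc: "sigma_compact_space X"
  obtain Kc :: "nat \<Rightarrow> 'a set" where Kc: "\<forall>n. compactin X (Kc n)"
    "\<forall>F. finite F \<longrightarrow> F \<subseteq> topspace X \<longrightarrow> (\<exists>n. F \<subseteq> Kc n)"
    using sigma_Kc[OF sc] by meson
  define \<A> where "\<A> = (\<lambda>(n, m). basic_nbhd X zero_fun (Kc n) (1 / (real m + 1))) ` (UNIV :: (nat \<times> nat) set)"
  have "countable \<A>" unfolding \<A>_def by simp
  moreover have "cofinal_family (nbhds_pt (Ck X) zero_fun) (nbhds_pt (Cp X) zero_fun) \<A>"
    unfolding cofinal_family_def
  proof (intro conjI ballI subsetI)
    fix E assume "E \<in> \<A>"
    then obtain n m where E: "E = basic_nbhd X zero_fun (Kc n) (1 / (real m + 1))" unfolding \<A>_def by auto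
    have "openin (Ck X) E" unfolding E by (rule Ck_basic_open[OF zero_Cfun]) (use Kc in auto)
    moreover have "zero_fun \<in> E" unfolding E basic_nbhd_def using zero_Cfun by (simp add: zero_fun_def)
    ultimately show "E \<in> nbhds_pt (Ck X) zero_fun" by (simp add: nbhds_pt_iff)
  next
    fix F assume "F \<in> nbhds_pt (Cp X) zero_fun"
    then have Fo: "openin (Cp X) F" "zero_fun \<in> F" by (simp_all add: nbhds_pt_iff)
    obtain A d where A: "finite A" "A \<subseteq> topspace X" "d > 0" "basic_nbhd X zero_fun A d \<subseteq> F"
      using Cp_local[OF Fo] by blast
    obtain n where n: "A \<subseteq> Kc n" using Kc(2) A(1,2) by blast
    obtain m :: nat where m: "inverse (real (Suc m)) < d" using reals_Archimedean A(3) by blast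
    have "1 / (real m + 1) \<le> d" using m by (simp add: inverse_eq_divide add.commute)
    then have "basic_nbhd X zero_fun (Kc n) (1 / (real m + 1)) \<subseteq> basic_nbhd X zero_fun A d"
      using n by (intro basic_nbhd_mono)
    moreover have "basic_nbhd X zero_fun (Kc n) (1 / (real m + 1)) \<in> \<A>" unfolding \<A>_def by force
    ultimately show "\<exists>E\<in>\<A>. E \<subseteq> F" using A(4) by blast
  qed
  ultimately have c1: "\<exists>\<A>. countable \<A> \<and> cofinal_family (nbhds_pt (Ck X) zero_fun) (nbhds_pt (Cp X) zero_fun) \<A>"
    by blast
  show "cof_is_omega (nbhds_pt (Ck X) zero_fun) (nbhds_pt (Cp X) zero_fun)"
    unfolding cof_is_omega_def using c1 no_finite_cof[OF ne] by (rule conjI)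
next
  assume "cof_is_omega (nbhds_pt (Ck X) zero_fun) (nbhds_pt (Cp X) zero_fun)"
  then have "\<exists>\<A>. countable \<A> \<and> cofinal_family (nbhds_pt (Ck X) zero_fun) (nbhds_pt (Cp X) zero_fun) \<A>"
    unfolding cof_is_omega_def by (rule conjunct1)
  then obtain \<A> where cnt: "countable \<A>" and cf: "cofinal_family (nbhds_pt (Ck X) zero_fun) (nbhds_pt (Cp X) zero_fun) \<A>"
    by blast
  have sub: "\<A> \<subseteq> nbhds_pt (Ck X) zero_fun" and cof: "\<forall>F\<in>nbhds_pt (Cp X) zero_fun. \<exists>E\<in>\<A>. E \<subseteq> F"
    using cf unfolding cofinal_family_def by simp_all
  have "Cfun X \<in> nbhds_pt (Cp X) zero_fun"
    using Z_top(2) unfolding nbhds_pt_iff by (metis Cp_topspace openin_topspace)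
  then have Ane: "\<A> \<noteq> {}" using cof by blast
  define A where "A = from_nat_into \<A>"
  have Ain: "A n \<in> \<A>" for n unfolding A_def using Ane by (rule from_nat_into)
  have rA: "range A = \<A>" unfolding A_def using range_from_nat_into[OF Ane cnt] .
  define K where "K = (\<lambda>n. fst (KD X zero_fun (A n)))"
  define d where "d = (\<lambda>n. snd (KD X zero_fun (A n)))"
  have Kd: "K n \<in> cpt_sets X \<and> d n > 0 \<and> basic_nbhd X zero_fun (K n) (d n) \<subseteq> A n" for n
  proof -
    have "A n \<in> nbhds_pt (Ck X) zero_fun" using Ain[of n] sub by blast
    then have "openin (Ck X) (A n)" "zero_fun \<in> A n" by (simp_all add: nbhds_pt_iff)
    then show ?thesis using KD[OF ne] unfolding K_def d_def by blast
  qed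
  have cK: "compactin X (K n)" for n using Kd by (simp add: cpt_sets_def)
  have "\<Union>(range K) = topspace X"
  proof
    show "\<Union>(range K) \<subseteq> topspace X" using cK compactin_subset_topspace by blast
    show "topspace X \<subseteq> \<Union>(range K)"
    proof
      fix y assume y: "y \<in> topspace X"
      define F0 where "F0 = basic_nbhd X zero_fun {y} 1"
      have "openin (Cp X) F0" unfolding F0_def by (rule Cp_basic_open[OF zero_Cfun]) (use y in auto)
      moreover have "zero_fun \<in> F0" unfolding F0_def basic_nbhd_def using zero_Cfun by (simp add: zero_fun_def)
      ultimately have "F0 \<in> nbhds_pt (Cp X) zero_fun" by (simp add: nbhds_pt_iff)
      then obtain E where E: "E \<in> \<A>" "E \<subseteq> F0" using cof by blast
      then obtain n where n: "E = A n" using rA by blast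
      show "y \<in> \<Union>(range K)"
      proof (rule ccontr)
        assume ny: "y \<notin> \<Union>(range K)"
        define U where "U = topspace X - {y}"
        have Uo: "openin X U" unfolding U_def by (rule open_minus_pt[OF T])
        have KU: "K n \<subseteq> U" using ny compactin_subset_topspace[OF cK[of n]] unfolding U_def by blast
        note u = ury[OF T cK[of n] Uo KU]
        define h where "h = cf X (ury X (K n) U)"
        have hC: "h \<in> Cfun X" unfolding h_def using u by (intro Cfun_cf) blast
        have "\<forall>x\<in>K n. \<bar>zero_fun x - h x\<bar> < d n"
        proof
          fix x assume x: "x \<in> K n"
          then have "x \<in> topspace X" using compactin_subset_topspace[OF cK[of n]] by blast
          then have "h x = 0" unfolding h_def using u x by (simp add: cf_eq)
          then show "\<bar>zero_fun x - h x\<bar> < d n" using Kd[of n] by (simp add: zero_fun_def)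
        qed
        then have "h \<in> basic_nbhd X zero_fun (K n) (d n)" using hC unfolding basic_nbhd_def by blast
        then have "h \<in> F0" using Kd[of n] E(2) n by blast
        then have "\<bar>zero_fun y - h y\<bar> < 1" unfolding F0_def basic_nbhd_def by blast
        moreover have "y \<in> topspace X - U" using y unfolding U_def by blast
        then have "h y = 1" unfolding h_def using u y by (simp add: cf_eq)
        ultimately show False by (simp add: zero_fun_def)
      qed
    qed
  qed
  then show "sigma_compact_space X" unfolding sigma_compact_space_def using cK by blast
qed


lemma dual_all_gen: "game_dual A B \<Longrightarrow> game_equiv A A' \<Longrightarrow> game_equiv B B' \<Longrightarrow> game_dual A' B'"
  using dual_equiv_left dual_equiv_right by blast

lemma equiv_refl: "game_equiv A A"
  unfolding game_equiv_def game_le_II_def by blast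

lemma eqI_gen: "game_equiv G H \<Longrightarrow> (I_wins G \<longleftrightarrow> I_wins H) \<and> (I_pre_wins G \<longleftrightarrow> I_pre_wins H)"
  unfolding game_equiv_def game_le_II_def by blast

theorem mainTheorem2:
  fixes X :: "'a topology"
  assumes "Tychonoff_space X" and "topspace X \<noteq> {}"
  defines "A1 \<equiv> G1_neg (nbhds_cpt X) (omega_covers X)"
      and "A2 \<equiv> G1_neg (nbhds_pt (Ck X) zero_fun) (clustering_sets (Cp X) zero_fun)"
      and "A3 \<equiv> G1 (nonempty_opens (Ck X)) (closed_discrete_sets (Cp X))"
      and "B1 \<equiv> G1 (k_covers X) (omega_covers X)"
      and "B2 \<equiv> G1 (clustering_sets (Ck X) zero_fun) (clustering_sets (Cp X) zero_fun)"
      and "B3 \<equiv> G1 (dense_sets (Ck X)) (clustering_sets (Cp X) zero_fun)"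
      and "C1 \<equiv> G1_neg (nbhds_cpt X) (gamma_covers X)"
      and "C2 \<equiv> ((nbhds_pt (Ck X) zero_fun,
                  \<lambda>x. \<not> limitin (Cp X) x zero_fun sequentially) :: ('a \<Rightarrow> real) game)"
      and "D \<equiv> G1 (k_covers X) (gamma_covers X)"
  shows
    "(game_equiv A1 A2 \<and> game_equiv A2 A3 \<and> game_equiv A1 A3)
   \<and> (game_equiv B1 B2 \<and> game_equiv B2 B3 \<and> game_equiv B1 B3)
   \<and> (game_dual A1 B1 \<and> game_dual A1 B2 \<and> game_dual A1 B3 \<and>
      game_dual A2 B1 \<and> game_dual A2 B2 \<and> game_dual A2 B3 \<and>
      game_dual A3 B1 \<and> game_dual A3 B2 \<and> game_dual A3 B3)
   \<and> ((I_pre_wins A3 \<longleftrightarrow> sigma_compact_space X) \<and>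
      (sigma_compact_space X \<longleftrightarrow>
         cof_is_omega (nbhds_pt (Ck X) zero_fun) (nbhds_pt (Cp X) zero_fun)))
   \<and> (game_equiv_One C1 A1 \<and> game_equiv_One C1 A2 \<and>
      game_equiv_One C2 A1 \<and> game_equiv_One C2 A2)
   \<and> game_equiv_Two B1 D"
proof -
  note T = assms(1) and ne = assms(2)
  define A3' where "A3' = G1_neg (nonempty_opens (Ck X)) (clustering_sets (Cp X) zero_fun)"
  have dA1B1: "game_dual A1 B1" unfolding A1_def B1_def by (rule dual_A1B1[OF ne])
  have dA2B2: "game_dual A2 B2" unfolding A2_def B2_def by (rule dual_A2B2)
  have dA3B3: "game_dual A3' B3" unfolding A3'_def B3_def by (rule dual_A3B3)
  have dC1D: "game_dual C1 D" unfolding C1_def D_def by (rule dual_A1B1[OF ne])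
  have le: "game_le_II A1 A2 \<and> game_le_II A2 A1 \<and> game_le_II A1 A3 \<and> game_le_II A3 A1 \<and>
            game_le_II A1 A3' \<and> game_le_II A3' A1"
  proof (cases "compactin X (topspace X)")
    case True
    have p1: "I_pre_wins A1" unfolding A1_def by (rule cpt_preA1[OF True ne])
    have p2: "I_pre_wins A2" unfolding A2_def by (rule cpt_preA2(1)[OF True])
    have p3: "I_pre_wins A3" unfolding A3_def by (rule cpt_preA3[OF True ne])
    have p4: "I_pre_wins A3'" unfolding A3'_def by (rule cpt_preA2(2)[OF True])
    show ?thesis
      by (intro conjI pre_le[OF p1] pre_le[OF p2] pre_le[OF p3] pre_le[OF p4])
  next
    case False
    have l1: "game_le_II A1 A2" unfolding A1_def A2_def by (rule T1[OF T ne])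
    have l2: "game_le_II A2 A1" unfolding A1_def A2_def by (rule T5[OF T False])
    have l3: "game_le_II A1 A3" unfolding A1_def A3_def by (rule T2[OF T ne])
    have l4: "game_le_II A3 A1" unfolding A1_def A3_def by (rule T6[OF T False])
    have l5: "game_le_II A1 A3'" unfolding A1_def A3'_def by (rule T3[OF T ne])
    have "game_le_II A3' A2" unfolding A3'_def A2_def by (rule T4)
    then have l6: "game_le_II A3' A1" using l2 by (rule game_le_trans)
    show ?thesis using l1 l2 l3 l4 l5 l6 by blast
  qed
  have eA12: "game_equiv A1 A2" using le unfolding game_equiv_def by blast
  have eA13: "game_equiv A1 A3" using le unfolding game_equiv_def by blast
  have eA23: "game_equiv A2 A3" using equiv_trans[OF equiv_sym[OF eA12] eA13] .
  have eB12: "game_equiv B1 B2" unfolding game_equiv_def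
    using dual_flip[OF dA2B2 dA1B1] dual_flip[OF dA1B1 dA2B2] le by blast
  have eB13: "game_equiv B1 B3" unfolding game_equiv_def
    using dual_flip[OF dA3B3 dA1B1] dual_flip[OF dA1B1 dA3B3] le by blast
  have eB23: "game_equiv B2 B3" using equiv_trans[OF equiv_sym[OF eB12] eB13] .
  note eA11 = equiv_refl[of A1] and eB11 = equiv_refl[of B1]
  have part3: "game_dual A1 B1 \<and> game_dual A1 B2 \<and> game_dual A1 B3 \<and>
      game_dual A2 B1 \<and> game_dual A2 B2 \<and> game_dual A2 B3 \<and>
      game_dual A3 B1 \<and> game_dual A3 B2 \<and> game_dual A3 B3"
  proof (intro conjI)
    show "game_dual A1 B1" by (rule dA1B1)
    show "game_dual A1 B2" by (rule dual_all_gen[OF dA1B1 eA11 eB12])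
    show "game_dual A1 B3" by (rule dual_all_gen[OF dA1B1 eA11 eB13])
    show "game_dual A2 B1" by (rule dual_all_gen[OF dA1B1 eA12 eB11])
    show "game_dual A2 B2" by (rule dual_all_gen[OF dA1B1 eA12 eB12])
    show "game_dual A2 B3" by (rule dual_all_gen[OF dA1B1 eA12 eB13])
    show "game_dual A3 B1" by (rule dual_all_gen[OF dA1B1 eA13 eB11])
    show "game_dual A3 B2" by (rule dual_all_gen[OF dA1B1 eA13 eB12])
    show "game_dual A3 B3" by (rule dual_all_gen[OF dA1B1 eA13 eB13])
  qed
  have part4: "(I_pre_wins A3 \<longleftrightarrow> sigma_compact_space X) \<and>
      (sigma_compact_space X \<longleftrightarrow> cof_is_omega (nbhds_pt (Ck X) zero_fun) (nbhds_pt (Cp X) zero_fun))"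
  proof
    have "I_pre_wins A1 \<longleftrightarrow> sigma_compact_space X" unfolding A1_def by (rule sigma_preA1[OF T ne])
    then show "I_pre_wins A3 \<longleftrightarrow> sigma_compact_space X" using eqI_gen[OF eA13] by blast
    show "sigma_compact_space X \<longleftrightarrow> cof_is_omega (nbhds_pt (Ck X) zero_fun) (nbhds_pt (Cp X) zero_fun)"
      by (rule sigma_cof[OF T ne])
  qed
  have oC1A1: "game_equiv_One C1 A1" unfolding C1_def A1_def by (rule C1A1)
  have oC2A2: "game_equiv_One C2 A2" unfolding C2_def A2_def by (rule C2A2)
  have part5: "game_equiv_One C1 A1 \<and> game_equiv_One C1 A2 \<and>
      game_equiv_One C2 A1 \<and> game_equiv_One C2 A2"
    using oC1A1 oC2A2 eqI_gen[OF eA12] unfolding game_equiv_One_def by blast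
  have part6: "game_equiv_Two B1 D"
    using dA1B1 dC1D oC1A1 unfolding game_equiv_Two_def game_dual_def game_equiv_One_def by blast
  show ?thesis
    using eA12 eA13 eA23 eB12 eB13 eB23 part3 part4 part5 part6 by blast
qed


end
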